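(* Consider the abstract problem $u_{tt}+\mathcal Au+kD(u_t)=F(u)$, $u(0)=u_0\in\mathcal D(\mathcal A^{1/2})$, $u_t(0)=u_1\in H_0$, under Assumptions (AB1) and (AB2). Then the dynamical system $(\mathcal H,S_t)$ generated by it on $\mathcal H=\mathcal D(\mathcal A^{1/2})\times H_0$ is ultimately dissipative: there exists $R_0>0$ such that for every bounded set $B\subset\mathcal H$ there is $t_0=t_0(B)$ with $\|S_ty\|_{\mathcal H}\le R_0$ for all $y\in B$ and $t\ge t_0$. Moreover, there exists a bounded forward invariant absorbing set $\mathcal B_0\subset\mathcal H$.
   Context: $H_0$ is a real Hilbert space with inner product $(\cdot,\cdot)$ and norm $|\cdot|$; $\mathcal A$ is a closed positive self-adjoint operator on $H_0$; $\mathcal H=\mathcal D(\mathcal A^{1/2})\times H_0$ with $\|\{u,v\}\|_{\mathcal H}^2=|\mathcal A^{1/2}u|^2+|v|^2$; $k>0$ is a constant. Assumption (AB1): (i) $D:\mathcal D(\mathcal A^{1/2})\to[\mathcal D(\mathcal A^{1/2})]'$ is monotone and hemicontinuous with $D(0)=0$; (ii) $F:\mathcal D(\mathcal A^{1/2})\to H_0$ is locally Lipschitz and $F(u)=-\Pi'(u)+N(u)$, where $\Pi=\Pi_0+\Pi_1$ is a $C^1$ functional on $\mathcal D(\mathcal A^{1/2})$ with Fréchet derivative $\Pi'$, such that (a) $\Pi_0\ge0$ is bounded on bounded sets of $\mathcal D(\mathcal A^{1/2})$, (b) for every $\eta>0$ there is $c_\eta\ge0$ with $|\Pi_1(u)|\le\eta(|\mathcal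 A^{1/2}u|^2+\Pi_0(u))+c_\eta$ for all $u$; (iii) there are $c_1,c_2>0$ and $0\le k_0<k$ with $(N(u),v)\le c_1+c_2[\|\{u,v\}\|_{\mathcal H}^2+\Pi_0(u)]+k_0(D(v),v)$ for all $u,v\in\mathcal D(\mathcal A^{1/2})$. It is assumed that the problem is well posed in $\mathcal H$, generating a dynamical system $S_t\{u_0,u_1\}=\{u(t),u_t(t)\}$, whose solutions satisfy $\mathcal E(u(t),u_t(t))+k\int_0^t(D(u_t),u_t)ds=\mathcal E(u_0,u_1)+\int_0^t(N(u),u_t)ds$, where $E(u,v)=\frac12(|\mathcal A^{1/2}u|^2+|v|^2)+\Pi_0(u)$ and $\mathcal E(u,v)=E(u,v)+\Pi_1(u)$. Assumption (AB2): there is $\gamma\in[0,1)$ such that (i) there are $c_0\ge0$, $c_1>0$ with $|v|^2\le c_0+c_1(D(v),v)$ for all $v\in\mathcal D(\mathcal A^{1/2})$; (ii) there are $\eta\in[0,1)$, $c_2>0$, $c_3,c_4\ge0$ with $-k(D(v),u)+(N(u),u)\le(\Pi'(u),u)+\eta|\mathcal A^{1/2}u|^2-c_2\Pi_0(u)+c_3+c_4[1+E(u,v)]^\gamma(D(v),v)$ for all $u,v\in\mathcal D(\mathcal A^{1/2})$; (iii) there are $\eta\in[0,1)$ and a nondecreasing continuous $b:\mathbb R_+\to\mathbb R_+$ with $(N(u),v)\le\eta k(D(v),v)+\delta E(u,v)+b(1/\delta)$ for all $u,v\in\mathcal D(\mathcal A^{1/2})$ and all $0<\delta\le1$, and, in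 the case $\gamma>0$, the balancing condition $\lim_{x\to\infty}x^{1-1/\gamma}b(x)=0$. A set $\mathcal B_0$ is absorbing if for every bounded $B$ there is $t_0$ with $S_tB\subset\mathcal B_0$ for $t\ge t_0$; forward invariant if $S_t\mathcal B_0\subset\mathcal B_0$ for $t\ge0$. *)

theory Defs
  imports "HOL-Analysis.Analysis"
begin

(* Abstract setting.
   'h : the real Hilbert space H_0 (inner product = inner, norm = norm).
   'v : the space D(A^{1/2}) equipped with the inner product
        (A^{1/2}u, A^{1/2}w), so that norm u = |A^{1/2} u|.
   \<iota> : the (bounded, injective, dense) embedding D(A^{1/2}) \<hookrightarrow> H_0.
   The phase space \<H> = D(A^{1/2}) \<times> H_0 is the product type 'v \<times> 'h, whose
   library norm is sqrt(|A^{1/2}u|^2 + |v|^2).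
   Elements of [D(A^{1/2})]' are bounded linear functionals 'v \<Rightarrow>\<^sub>L real. *)

definition energy_E :: "('v::real_normed_vector \<Rightarrow> real) \<Rightarrow> 'v \<Rightarrow> 'h::real_normed_vector \<Rightarrow> real" where
  "energy_E Pi0 u v = (1/2) * ((norm u)\<^sup>2 + (norm v)\<^sup>2) + Pi0 u"

definition energy_full :: "('v::real_normed_vector \<Rightarrow> real) \<Rightarrow> ('v \<Rightarrow> real) \<Rightarrow> 'v \<Rightarrow> 'h::real_normed_vector \<Rightarrow> real" where
  "energy_full Pi0 Pi1 u v = energy_E Pi0 u v + Pi1 u"

(* (u, v) : [0,\<infinity>) \<rightarrow> D(A^{1/2}) \<times> H_0 is a (weak) solution of
     u_tt + A u + k D(u_t) = F(u)
   on [0,\<infinity>): u \<in> C(\<real>_+; D(A^{1/2})), v \<in> C(\<real>_+; H_0), v = u_t (in H_0),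
   u_t(t) \<in> D(A^{1/2}) for a.e. t (so that D(u_t) makes sense), and for every
   test element w \<in> D(A^{1/2}) the equation holds in integrated weak form:
     (u_t(t), w) - (u_t(0), w)
        = \<integral>_0^t [ -(A^{1/2}u, A^{1/2}w) - k (D(u_t), w) + (F(u), w) ] ds. *)
definition weak_solution ::
  "('v::{real_inner,complete_space} \<Rightarrow> 'h::{real_inner,complete_space}) \<Rightarrow> real \<Rightarrow>
   ('v \<Rightarrow> ('v \<Rightarrow>\<^sub>L real)) \<Rightarrow> ('v \<Rightarrow> 'h) \<Rightarrow> (real \<Rightarrow> 'v) \<Rightarrow> (real \<Rightarrow> 'h) \<Rightarrow> bool" where
  "weak_solution \<iota> k D F u v \<longleftrightarrow>
     continuous_on {0..} u \<and> continuous_on {0..} v \<and>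
     (\<forall>t\<ge>0. ((\<lambda>s. \<iota> (u s)) has_vector_derivative v t) (at t within {0..})) \<and>
     (AE t in lborel. 0 \<le> t \<longrightarrow> v t \<in> range \<iota>) \<and>
     (\<forall>w t. 0 \<le> t \<longrightarrow>
        ((\<lambda>s. - inner (u s) w - k * blinfun_apply (D (inv \<iota> (v s))) w + inner (F (u s)) (\<iota> w))
            integrable_on {0..t}) \<and>
        inner (v t) (\<iota> w) - inner (v 0) (\<iota> w) =
          integral {0..t}
            (\<lambda>s. - inner (u s) w - k * blinfun_apply (D (inv \<iota> (v s))) w + inner (F (u s)) (\<iota> w)))"

definition energy_identity ::
  "('v::{real_inner,complete_space} \<Rightarrow> 'h::{real_inner,complete_space}) \<Rightarrow> real \<Rightarrow>
   ('v \<Rightarrow> ('v \<Rightarrow>\<^sub>L real)) \<Rightarrow> ('v \<Rightarrow> 'h) \<Rightarrow> ('v \<Rightarrow> real) \<Rightarrow> ('v \<Rightarrow> real) \<Rightarrow>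
   (real \<Rightarrow> 'v) \<Rightarrow> (real \<Rightarrow> 'h) \<Rightarrow> bool" where
  "energy_identity \<iota> k D N Pi0 Pi1 u v \<longleftrightarrow>
     (\<forall>t\<ge>0.
        ((\<lambda>s. blinfun_apply (D (inv \<iota> (v s))) (inv \<iota> (v s))) integrable_on {0..t}) \<and>
        ((\<lambda>s. inner (N (u s)) (v s)) integrable_on {0..t}) \<and>
        energy_full Pi0 Pi1 (u t) (v t)
          + k * integral {0..t} (\<lambda>s. blinfun_apply (D (inv \<iota> (v s))) (inv \<iota> (v s)))
        = energy_full Pi0 Pi1 (u 0) (v 0) + integral {0..t} (\<lambda>s. inner (N (u s)) (v s)))"

definition absorbing_set :: "(real \<Rightarrow> 'a::real_normed_vector \<Rightarrow> 'a) \<Rightarrow> 'a set \<Rightarrow> bool" where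
  "absorbing_set S B0 \<longleftrightarrow>
     (\<forall>B. bounded B \<longrightarrow> (\<exists>t0\<ge>0. \<forall>t\<ge>t0. S t ` B \<subseteq> B0))"

definition forward_invariant :: "(real \<Rightarrow> 'a \<Rightarrow> 'a) \<Rightarrow> 'a set \<Rightarrow> bool" where
  "forward_invariant S B0 \<longleftrightarrow> (\<forall>t\<ge>0. S t ` B0 \<subseteq> B0)"

end

theory Submission
  imports Defs "HOL-Analysis.Analysis"
begin


lemma AE_negligible:
  assumes "AE x in lborel. P x"
  obtains N where "negligible N" "\<And>x. x \<notin> N \<Longrightarrow> P x"
proof -
  from AE_E[OF assms] obtain N where N: "{x \<in> space lborel. \<not> P x} \<subseteq> N" "emeasure lborel N = 0" "N \<in> sets lborel" by blast
  have "N \<in> null_sets lborel" using N by auto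
  then have "N \<in> null_sets lebesgue" by (rule null_sets_completionI)
  then have "negligible N" by (simp add: negligible_iff_null_sets)
  moreover have "\<And>x. x \<notin> N \<Longrightarrow> P x" using N(1) by auto
  ultimately show ?thesis using that by blast
qed

lemma integral_le_AE:
  fixes f g :: "real \<Rightarrow> real"
  assumes f: "f integrable_on {a..b}" and g: "g integrable_on {a..b}"
    and ae: "AE x in lborel. x \<in> {a..b} \<longrightarrow> f x \<le> g x"
  shows "integral {a..b} f \<le> integral {a..b} g"
proof -
  obtain N where N: "negligible N" "\<And>x. x \<notin> N \<Longrightarrow> x \<in> {a..b} \<longrightarrow> f x \<le> g x"
    using AE_negligible[OF ae] by blast
  define h where "h x = (if x \<in> N then 0 else g x - f x)" for x
  have d: "(\<lambda>x. g x - f x) integrable_on {a..b}" by (rule integrable_diff[OF g f])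
  have hi: "h integrable_on {a..b}"
    by (rule integrable_spike[OF d N(1)]) (auto simp: h_def)
  have "integral {a..b} (\<lambda>x. g x - f x) = integral {a..b} h"
    by (rule integral_spike[OF N(1)]) (auto simp: h_def)
  moreover have "0 \<le> integral {a..b} h"
    by (rule integral_nonneg[OF hi]) (use N(2) in \<open>auto simp: h_def\<close>)
  ultimately show ?thesis using integral_diff[OF g f] by simp
qed

lemma int_cmul_real:
  fixes f :: "real \<Rightarrow> real"
  shows "f integrable_on S \<Longrightarrow> (\<lambda>x. c * f x) integrable_on S"
  using integrable_on_cmult_left[of f S c] by simp

lemma chain_le:
  fixes f :: "real \<Rightarrow> real" and I :: "real \<Rightarrow> real \<Rightarrow> real"
  assumes add: "\<And>a b c. s \<le> a \<Longrightarrow> a \<le> b \<Longrightarrow> b \<le> c \<Longrightarrow> c \<le> t \<Longrightarrow> I a c = I a b + I b c"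
    and h: "h > 0"
    and loc: "\<And>a b. s \<le> a \<Longrightarrow> a \<le> b \<Longrightarrow> b \<le> t \<Longrightarrow> b - a \<le> h \<Longrightarrow> f b - f a \<le> I a b"
    and st: "s \<le> t"
  shows "f t - f s \<le> I s t"
proof -
  have main: "\<forall>a. s \<le> a \<and> a \<le> t \<and> t - a \<le> real n * h \<longrightarrow> f t - f a \<le> I a t" for n
  proof (induction n)
    case 0
    show ?case
    proof (intro allI impI)
      fix a assume "s \<le> a \<and> a \<le> t \<and> t - a \<le> real 0 * h"
      then show "f t - f a \<le> I a t" using loc[of a t] h by auto
    qed
  next
    case (Suc n)
    show ?case
    proof (intro allI impI)
      fix a assume a: "s \<le> a \<and> a \<le> t \<and> t - a \<le> real (Suc n) * h"
      show "f t - f a \<le> I a t"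
      proof (cases "t - a \<le> h")
        case True then show ?thesis using loc[of a t] a by auto
      next
        case False
        have 1: "f t - f (a + h) \<le> I (a + h) t"
          using Suc.IH a False h by (auto simp: algebra_simps)
        have 2: "f (a + h) - f a \<le> I a (a + h)" using loc[of a "a+h"] a False h by auto
        have 3: "I a t = I a (a + h) + I (a + h) t" using add[of a "a+h" t] a False h by auto
        show ?thesis using 1 2 3 by linarith
      qed
    qed
  qed
  obtain n where "(t - s) / h \<le> real n" using real_arch_simple by blast
  then have "t - s \<le> real n * h" using h by (simp add: field_simps)
  then show ?thesis using main[of n] st by auto
qed

lemma stay_below:
  fixes W :: "real \<Rightarrow> real"
  assumes cont: "continuous_on {s1..} W" and alpha: "\<alpha> > 0"
    and ineq: "\<And>a b. s1 \<le> a \<Longrightarrow> a \<le> b \<Longrightarrow> W b - W a \<le> - \<alpha> * integral {a..b} W"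
    and W0: "W s1 \<le> M" and M: "0 \<le> M" and t: "s1 \<le> t"
  shows "W t \<le> M"
proof (rule ccontr)
  assume Wt: "\<not> W t \<le> M"
  define A where "A = {s1..t} \<inter> W -` {..M}"
  have cA: "closed A" unfolding A_def
    by (rule continuous_closed_preimage) (auto intro: continuous_on_subset[OF cont])
  have s1A: "s1 \<in> A" using W0 t by (auto simp: A_def)
  have bA: "bdd_above A" by (auto simp: A_def bdd_above_def)
  define s2 where "s2 = Sup A"
  have s2A: "s2 \<in> A" unfolding s2_def using closed_contains_Sup[OF _ bA cA] s1A by blast
  have s2le: "\<And>r. r \<in> A \<Longrightarrow> r \<le> s2" unfolding s2_def using bA by (simp add: cSup_upper)
  have s2t: "s1 \<le> s2" "s2 \<le> t" "W s2 \<le> M" using s2A by (auto simp: A_def)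
  have cs: "continuous_on {s2..t} W" by (rule continuous_on_subset[OF cont]) (use s2t in auto)
  obtain r where r: "s2 \<le> r" "r \<le> t" "W r = M" using IVT'[of W s2 M t] s2t Wt cs by auto
  have "r \<in> A" using r s2t by (auto simp: A_def)
  then have "r = s2" using s2le r by force
  then have Ws2: "W s2 = M" using r by simp
  have ge: "\<And>x. x \<in> {s2..t} \<Longrightarrow> M \<le> W x"
  proof -
    fix x assume x: "x \<in> {s2..t}"
    show "M \<le> W x"
    proof (cases "x \<in> A")
      case True then have "x = s2" using s2le x by force
      then show ?thesis using Ws2 by simp
    next
      case False then show ?thesis using x s2t by (auto simp: A_def)
    qed
  qed
  have "0 \<le> integral {s2..t} W"
    by (rule integral_nonneg[OF integrable_continuous_interval[OF cs]]) (use ge M in force)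
  moreover have "0 \<le> \<alpha> * integral {s2..t} W" using calculation alpha by simp
  ultimately have "W t - W s2 \<le> 0" using ineq[of s2 t] s2t by linarith
  then show False using Wt Ws2 by simp
qed

lemma reach_below:
  fixes W :: "real \<Rightarrow> real"
  assumes cont: "continuous_on {s1..} W" and alpha: "\<alpha> > 0"
    and ineq: "\<And>a b. s1 \<le> a \<Longrightarrow> a \<le> b \<Longrightarrow> W b - W a \<le> - \<alpha> * integral {a..b} W"
    and W0: "W s1 \<le> A" and tau: "0 \<le> \<tau>" "A \<le> \<alpha> * \<tau>"
  shows "W (s1 + \<tau>) \<le> 1"
proof (cases "\<exists>r\<in>{s1..s1+\<tau>}. W r \<le> 1")
  case True
  then obtain r where r: "r \<in> {s1..s1+\<tau>}" "W r \<le> 1" by blast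
  show ?thesis
    by (rule stay_below[of r W \<alpha> 1]) (use r cont alpha ineq in \<open>auto intro: continuous_on_subset\<close>)
next
  case False
  have cs: "continuous_on {s1..s1+\<tau>} W" by (rule continuous_on_subset[OF cont]) auto
  have "integral {s1..s1+\<tau>} (\<lambda>x. 1) \<le> integral {s1..s1+\<tau>} W"
    by (rule integral_le[OF _ integrable_continuous_interval[OF cs]]) (use False in force)+
  then have "\<tau> \<le> integral {s1..s1+\<tau>} W" using tau by simp
  then have "\<alpha> * \<tau> \<le> \<alpha> * integral {s1..s1+\<tau>} W" using alpha by simp
  then have "W (s1 + \<tau>) - W s1 \<le> - \<alpha> * \<tau>" using ineq[of s1 "s1+\<tau>"] tau by linarith
  then show ?thesis using W0 tau by linarith
qed

lemma no_exit:
  fixes f :: "real \<Rightarrow> real"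
  assumes cont: "continuous_on {a..} f" and fa: "f a < R"
    and step: "\<And>t. a \<le> t \<Longrightarrow> (\<forall>r\<in>{a..t}. f r \<le> R) \<Longrightarrow> f t < R"
    and t1: "a \<le> t1"
  shows "f t1 < R"
proof (rule ccontr)
  assume nt: "\<not> f t1 < R"
  define A where "A = {a..t1} \<inter> f -` {R..}"
  have cA: "closed A" unfolding A_def
    by (rule continuous_closed_preimage) (auto intro: continuous_on_subset[OF cont])
  have t1A: "t1 \<in> A" using nt t1 by (auto simp: A_def)
  have bA: "bdd_below A" by (auto simp: A_def bdd_below_def)
  define t2 where "t2 = Inf A"
  have t2A: "t2 \<in> A" unfolding t2_def using closed_contains_Inf[OF _ bA cA] t1A by blast
  have t2le: "\<And>r. r \<in> A \<Longrightarrow> t2 \<le> r" unfolding t2_def using bA by (simp add: cInf_lower)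
  have t2p: "a \<le> t2" "t2 \<le> t1" "R \<le> f t2" using t2A by (auto simp: A_def)
  have cs: "continuous_on {a..t2} f" by (rule continuous_on_subset[OF cont]) auto
  obtain r where r: "a \<le> r" "r \<le> t2" "f r = R" using IVT'[of f a R t2] t2p fa cs by auto
  have "r \<in> A" using r t2p by (auto simp: A_def)
  then have "r = t2" using t2le r by force
  have le: "\<forall>x\<in>{a..t2}. f x \<le> R"
  proof
    fix x assume x: "x \<in> {a..t2}"
    show "f x \<le> R"
    proof (cases "x \<in> A")
      case True then have "x = t2" using t2le x by force
      then show ?thesis using r \<open>r = t2\<close> by simp
    next
      case False then show ?thesis using x t2p by (auto simp: A_def)
    qed
  qed
  show False using step[OF t2p(1) le] t2p by simp
qed



locale diss =
  fixes \<iota> :: "'v::{real_inner,complete_space} \<Rightarrow> 'h::{real_inner,complete_space}"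
    and k :: real
    and D :: "'v \<Rightarrow> ('v \<Rightarrow>\<^sub>L real)"
    and F N :: "'v \<Rightarrow> 'h"
    and Pi0 Pi1 :: "'v \<Rightarrow> real"
    and Pi' :: "'v \<Rightarrow> ('v \<Rightarrow>\<^sub>L real)"
    and S :: "real \<Rightarrow> 'v \<times> 'h \<Rightarrow> 'v \<times> 'h"
    and \<gamma> :: real
    and c0 c1 \<eta>2 c2 c3 c4 \<eta>3 cP :: real and b :: "real \<Rightarrow> real"
  assumes emb_lin: "bounded_linear \<iota>"
    and k_pos: "k > 0"
    and D_mono: "\<forall>u v. 0 \<le> blinfun_apply (D u) (u - v) - blinfun_apply (D v) (u - v)"
    and D_zero: "D 0 = 0"
    and F_loclip: "\<forall>R. \<exists>L. \<forall>x y. norm x \<le> R \<longrightarrow> norm y \<le> R \<longrightarrow> norm (F x - F y) \<le> L * norm (x - y)"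
    and Pi_deriv: "\<forall>u. ((\<lambda>x. Pi0 x + Pi1 x) has_derivative blinfun_apply (Pi' u)) (at u)"
    and F_decomp: "\<forall>u w. inner (F u) (\<iota> w) = - blinfun_apply (Pi' u) w + inner (N u) (\<iota> w)"
    and Pi0_nonneg: "\<forall>u. 0 \<le> Pi0 u"
    and Pi0_bdd: "\<forall>R. \<exists>C. \<forall>u. norm u \<le> R \<longrightarrow> Pi0 u \<le> C"
    and Pi1_b: "\<forall>u. \<bar>Pi1 u\<bar> \<le> 1/4 * ((norm u)\<^sup>2 + Pi0 u) + cP" and cP: "cP \<ge> 0"
    and S_sol: "\<forall>y. weak_solution \<iota> k D F (\<lambda>t. fst (S t y)) (\<lambda>t. snd (S t y))"
    and S_energy: "\<forall>y. energy_identity \<iota> k D N Pi0 Pi1 (\<lambda>t. fst (S t y)) (\<lambda>t. snd (S t y))"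
    and gam: "0 \<le> \<gamma>" "\<gamma> < 1"
    and ab1: "c0 \<ge> 0" "c1 > 0" "\<forall>v. (norm (\<iota> v))\<^sup>2 \<le> c0 + c1 * blinfun_apply (D v) v"
    and ab2: "0 \<le> \<eta>2" "\<eta>2 < 1" "c2 > 0" "c3 \<ge> 0" "c4 \<ge> 0"
      "\<forall>u v. - k * blinfun_apply (D v) u + inner (N u) (\<iota> u)
          \<le> blinfun_apply (Pi' u) u + \<eta>2 * (norm u)\<^sup>2 - c2 * Pi0 u + c3
             + c4 * (1 + energy_E Pi0 u (\<iota> v)) powr \<gamma> * blinfun_apply (D v) v"
    and ab3: "0 \<le> \<eta>3" "\<eta>3 < 1" "mono_on {0..} b" "\<forall>x\<ge>0. 0 \<le> b x"
      "\<forall>u v \<delta>. 0 < \<delta> \<longrightarrow> \<delta> \<le> 1 \<longrightarrow>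
            inner (N u) (\<iota> v) \<le> \<eta>3 * k * blinfun_apply (D v) v + \<delta> * energy_E Pi0 u (\<iota> v) + b (1 / \<delta>)"
      "\<gamma> > 0 \<longrightarrow> ((\<lambda>x. x powr (1 - 1 / \<gamma>) * b x) \<longlongrightarrow> 0) at_top"
begin

definition "uu y t = fst (S t y)"
definition "ww y t = snd (S t y)"
definition "VV y t = inv \<iota> (ww y t)"
definition "Dd y t = blinfun_apply (D (VV y t)) (VV y t)"
definition "En y t = energy_full Pi0 Pi1 (uu y t) (ww y t)"
definition "Psi y t = inner (ww y t) (\<iota> (uu y t))"
definition "gg y r z = - inner (uu y r) z - k * blinfun_apply (D (VV y r)) z + inner (F (uu y r)) (\<iota> z)"
definition "Nv y r = inner (N (uu y r)) (ww y r)"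

lemma D_nonneg: "0 \<le> blinfun_apply (D v) v"
  using D_mono[rule_format, of v 0] by (simp add: D_zero)

lemma Dd_nonneg: "0 \<le> Dd y t"
  unfolding Dd_def by (rule D_nonneg)

lemma Ci: obtains Ci where "Ci > 0" "\<And>x. norm (\<iota> x) \<le> Ci * norm x"
  using bounded_linear.pos_bounded[OF emb_lin] by (auto simp: mult.commute)

lemma E_bounds:
  shows "energy_E Pi0 u h \<le> 2 * energy_full Pi0 Pi1 u h + 2 * cP"
    and "energy_full Pi0 Pi1 u h \<le> 3/2 * energy_E Pi0 u h + cP"
    and "- cP \<le> energy_full Pi0 Pi1 u h"
    and "(norm u)\<^sup>2 + (norm h)\<^sup>2 \<le> 2 * energy_E Pi0 u h"
proof -
  have p: "\<bar>Pi1 u\<bar> \<le> 1/4 * ((norm u)\<^sup>2 + Pi0 u) + cP" using Pi1_b by blast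
  have q: "0 \<le> Pi0 u" using Pi0_nonneg by blast
  have r: "0 \<le> (norm h)\<^sup>2" "0 \<le> (norm u)\<^sup>2" by simp_all
  show "energy_E Pi0 u h \<le> 2 * energy_full Pi0 Pi1 u h + 2 * cP"
    using p q r unfolding energy_full_def energy_E_def abs_le_iff by argo
  show "energy_full Pi0 Pi1 u h \<le> 3/2 * energy_E Pi0 u h + cP"
    using p q r unfolding energy_full_def energy_E_def abs_le_iff by argo
  show "- cP \<le> energy_full Pi0 Pi1 u h"
    using p q r unfolding energy_full_def energy_E_def abs_le_iff by argo
  show "(norm u)\<^sup>2 + (norm h)\<^sup>2 \<le> 2 * energy_E Pi0 u h"
    using q unfolding energy_E_def by argo
qed

lemma sol:
  shows "continuous_on {0..} (uu y)" "continuous_on {0..} (ww y)"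
    "\<And>t. 0 \<le> t \<Longrightarrow> ((\<lambda>s. \<iota> (uu y s)) has_vector_derivative ww y t) (at t within {0..})"
    "AE t in lborel. 0 \<le> t \<longrightarrow> ww y t \<in> range \<iota>"
    "\<And>w t. 0 \<le> t \<Longrightarrow> (\<lambda>s. gg y s w) integrable_on {0..t}"
    "\<And>w t. 0 \<le> t \<Longrightarrow> inner (ww y t) (\<iota> w) - inner (ww y 0) (\<iota> w) = integral {0..t} (\<lambda>s. gg y s w)"
  using S_sol[rule_format, of y] unfolding weak_solution_def uu_def[abs_def] ww_def[abs_def] gg_def VV_def
  by auto

lemma energy:
  assumes "0 \<le> t"
  shows "Dd y integrable_on {0..t}" "Nv y integrable_on {0..t}"
    "En y t + k * integral {0..t} (Dd y) = En y 0 + integral {0..t} (Nv y)"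
  using S_energy[rule_format, of y] assms unfolding energy_identity_def uu_def[abs_def] ww_def[abs_def]
    Dd_def[abs_def] VV_def En_def Nv_def
  by auto

lemma Pi_cont: "continuous_on UNIV (\<lambda>x. Pi0 x + Pi1 x)"
  using Pi_deriv has_derivative_continuous continuous_at_imp_continuous_on by blast

lemma En_cont: "continuous_on {0..} (En y)"
proof -
  have e: "En y t = 1/2 * ((norm (uu y t))\<^sup>2 + (norm (ww y t))\<^sup>2) + (Pi0 (uu y t) + Pi1 (uu y t))" for t
    unfolding En_def energy_full_def energy_E_def by simp
  have c1: "continuous_on {0..} (\<lambda>t. Pi0 (uu y t) + Pi1 (uu y t))"
    using continuous_on_compose2[OF Pi_cont sol(1)] by auto
  show ?thesis unfolding e[abs_def]
    by (intro continuous_intros c1 sol(1) sol(2))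
qed

lemma Psi_cont: "continuous_on {0..} (Psi y)"
  unfolding Psi_def[abs_def]
  by (intro continuous_intros sol(1) sol(2) continuous_on_compose2[OF linear_continuous_on[OF emb_lin] sol(1)]) auto

lemma En_diff:
  assumes "0 \<le> s" "s \<le> t"
  shows "En y t - En y s = - k * integral {s..t} (Dd y) + integral {s..t} (Nv y)"
proof -
  have "integral {0..s} (Dd y) + integral {s..t} (Dd y) = integral {0..t} (Dd y)"
    using Henstock_Kurzweil_Integration.integral_combine[OF assms energy(1)[of t y]] assms by simp
  moreover have "integral {0..s} (Nv y) + integral {s..t} (Nv y) = integral {0..t} (Nv y)"
    using Henstock_Kurzweil_Integration.integral_combine[OF assms energy(2)[of t y]] assms by simp
  ultimately have "k * integral {0..t} (Dd y) = k * integral {0..s} (Dd y) + k * integral {s..t} (Dd y)"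
    "integral {0..t} (Nv y) = integral {0..s} (Nv y) + integral {s..t} (Nv y)"
    by (metis distrib_left)+
  then show ?thesis using energy(3)[of s y] energy(3)[of t y] assms by linarith
qed

lemma ae_range: "AE r in lborel. 0 \<le> r \<longrightarrow> \<iota> (VV y r) = ww y r"
  using sol(4)[of y] by eventually_elim (auto simp: VV_def f_inv_into_f)

end

context diss begin

lemma Nv_bound:
  assumes d: "0 < \<delta>" "\<delta> \<le> 1"
  shows "AE r in lborel. 0 \<le> r \<longrightarrow> Nv y r \<le> \<eta>3 * k * Dd y r + \<delta> * (2 * En y r + 2 * cP) + b (1/\<delta>)"
  using ae_range[of y]
proof eventually_elim
  case (elim r)
  show ?case
  proof
    assume r: "0 \<le> r"
    have e: "\<iota> (VV y r) = ww y r" using elim r by simp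
    have "Nv y r \<le> \<eta>3 * k * Dd y r + \<delta> * energy_E Pi0 (uu y r) (ww y r) + b (1/\<delta>)"
      using ab3(5)[rule_format, OF d, of "uu y r" "VV y r"] unfolding Nv_def Dd_def e by simp
    moreover have "\<delta> * energy_E Pi0 (uu y r) (ww y r) \<le> \<delta> * (2 * En y r + 2 * cP)"
      using E_bounds(1) d unfolding En_def by (intro mult_left_mono) auto
    ultimately show "Nv y r \<le> \<eta>3 * k * Dd y r + \<delta> * (2 * En y r + 2 * cP) + b (1/\<delta>)" by linarith
  qed
qed

lemma F_bdd: obtains BF where "BF \<ge> 0" "\<And>x. norm x \<le> R \<Longrightarrow> norm (F x) \<le> BF"
proof -
  obtain L where L: "\<forall>x y. norm x \<le> max R 0 \<longrightarrow> norm y \<le> max R 0 \<longrightarrow> norm (F x - F y) \<le> L * norm (x - y)"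
    using F_loclip by blast
  have "norm (F x) \<le> norm (F 0) + \<bar>L\<bar> * max R 0" if x: "norm x \<le> R" for x
  proof -
    have "norm (F x - F 0) \<le> L * norm x" using L[rule_format, of x 0] x by auto
    also have "\<dots> \<le> \<bar>L\<bar> * max R 0" using x
      by (metis abs_ge_self abs_ge_zero max.coboundedI1 mult_mono norm_ge_zero)
    finally show ?thesis using norm_triangle_sub[of "F x" "F 0"] by linarith
  qed
  then show ?thesis using that[of "norm (F 0) + \<bar>L\<bar> * max R 0"] by force
qed

lemma Pi0_bdd': obtains P where "P \<ge> 0" "\<And>x. norm x \<le> R \<Longrightarrow> Pi0 x \<le> P"
proof -
  obtain C where "\<forall>u. norm u \<le> R \<longrightarrow> Pi0 u \<le> C" using Pi0_bdd by blast
  then show ?thesis using that[of "max C 0"] by force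
qed

lemma D_norm_bound:
  obtains M where "M \<ge> 0" "\<And>v z. norm (\<iota> v) \<le> Bv \<Longrightarrow> \<bar>blinfun_apply (D v) z\<bar> \<le> M * (1 + blinfun_apply (D v) v) * norm z"
proof -
  obtain Ci where Ci: "Ci > 0" "\<And>x. norm (\<iota> x) \<le> Ci * norm x" using Ci by blast
  obtain BF where BF: "BF \<ge> 0" "\<And>x. norm x \<le> 1 \<Longrightarrow> norm (F x) \<le> BF" using F_bdd by blast
  obtain P where P: "P \<ge> 0" "\<And>x. norm x \<le> 1 \<Longrightarrow> Pi0 x \<le> P" using Pi0_bdd' by blast
  define A0 where "A0 = BF * Ci + \<eta>2 + c3"
  define A1 where "A1 = c4 * (2 + (max Bv 0)\<^sup>2 / 2 + P)"
  have A0: "A0 \<ge> 0" unfolding A0_def using BF Ci ab2 by simp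
  have A1: "A1 \<ge> 0" unfolding A1_def using P ab2 by simp
  have one: "- k * blinfun_apply (D v) U \<le> A0 + A1 * blinfun_apply (D v) v"
    if U: "norm U = 1" and v: "norm (\<iota> v) \<le> Bv" for U v
  proof -
    let ?E = "energy_E Pi0 U (\<iota> v)"
    have h1: "- k * blinfun_apply (D v) U + inner (N U) (\<iota> U)
          \<le> blinfun_apply (Pi' U) U + \<eta>2 * (norm U)\<^sup>2 - c2 * Pi0 U + c3
             + c4 * (1 + ?E) powr \<gamma> * blinfun_apply (D v) v" using ab2(6) by blast
    have h2: "inner (F U) (\<iota> U) = - blinfun_apply (Pi' U) U + inner (N U) (\<iota> U)" using F_decomp by blast
    have h3: "- inner (F U) (\<iota> U) \<le> BF * Ci"
    proof -
      have "- inner (F U) (\<iota> U) \<le> norm (F U) * norm (\<iota> U)"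
        using Cauchy_Schwarz_ineq2[of "F U" "\<iota> U"] by linarith
      also have "\<dots> \<le> BF * Ci" using BF(2)[of U] Ci(2)[of U] U BF(1)
        by (intro mult_mono) auto
      finally show ?thesis .
    qed
    have h4: "- c2 * Pi0 U \<le> 0" using ab2(3) Pi0_nonneg by (simp add: mult_nonneg_nonneg)
    have E0: "0 \<le> ?E" unfolding energy_E_def using Pi0_nonneg by (simp add: add_nonneg_nonneg)
    have E1: "?E \<le> 1 + (max Bv 0)\<^sup>2 / 2 + P"
    proof -
      have sq: "(norm (\<iota> v))\<^sup>2 \<le> (max Bv 0)\<^sup>2" using v by (intro power_mono) auto
      have "Pi0 U \<le> P" using U P(2)[of U] by simp
      moreover have "?E = (1 + (norm (\<iota> v))\<^sup>2)/2 + Pi0 U" unfolding energy_E_def using U by simp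
      ultimately show ?thesis using sq by argo
    qed
    have h5: "(1 + ?E) powr \<gamma> \<le> 1 + ?E"
      using powr_mono[of \<gamma> 1 "1 + ?E"] gam E0 by simp
    have h6: "c4 * (1 + ?E) powr \<gamma> * blinfun_apply (D v) v \<le> A1 * blinfun_apply (D v) v"
      unfolding A1_def using h5 E1 ab2(5) D_nonneg[of v]
      by (intro mult_right_mono mult_left_mono) auto
    show ?thesis using h1 h2 h3 h4 h6 U unfolding A0_def by simp
  qed
  define M where "M = (A0 + A1) / k"
  have M: "M \<ge> 0" unfolding M_def using A0 A1 k_pos by simp
  have "\<bar>blinfun_apply (D v) z\<bar> \<le> M * (1 + blinfun_apply (D v) v) * norm z"
    if v: "norm (\<iota> v) \<le> Bv" for v z
  proof (cases "z = 0")
    case True then show ?thesis by simp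
  next
    case False
    define U where "U = (1 / norm z) *\<^sub>R z"
    have nU: "norm U = 1" "norm (- U) = 1" using False by (simp_all add: U_def)
    have zU: "blinfun_apply (D v) z = norm z * blinfun_apply (D v) U"
      using False by (simp add: U_def blinfun.scaleR_right)
    have a: "- k * blinfun_apply (D v) U \<le> A0 + A1 * blinfun_apply (D v) v" using one[OF nU(1) v] .
    have b: "k * blinfun_apply (D v) U \<le> A0 + A1 * blinfun_apply (D v) v"
      using one[OF nU(2) v] by (simp add: blinfun.minus_right)
    have "k * \<bar>blinfun_apply (D v) U\<bar> \<le> A0 + A1 * blinfun_apply (D v) v"
      using a b k_pos by (simp add: abs_if)
    also have "\<dots> \<le> (A0 + A1) * (1 + blinfun_apply (D v) v)"
      using A0 A1 D_nonneg[of v] by (simp add: algebra_simps)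
    finally have "\<bar>blinfun_apply (D v) U\<bar> \<le> M * (1 + blinfun_apply (D v) v)"
      unfolding M_def using k_pos by (simp add: field_simps)
    then show ?thesis unfolding zU abs_mult using norm_ge_zero[of z]
      by (simp add: mult_left_mono mult.commute)
  qed
  then show ?thesis using that M by blast
qed

lemma gg_diff: "gg y r (z1 - z2) = gg y r z1 - gg y r z2"
proof -
  have eq: "\<iota> (z1 - z2) = \<iota> z1 - \<iota> z2" by (rule linear_diff[OF bounded_linear.linear[OF emb_lin]])
  show ?thesis unfolding gg_def inner_diff_right blinfun.diff_right eq by (simp add: algebra_simps)
qed

lemma traj_bounds:
  assumes "0 \<le> s"
  obtains Bu Bw where "Bu \<ge> 0" "Bw \<ge> 0" "\<And>r. r \<in> {s..t} \<Longrightarrow> norm (uu y r) \<le> Bu"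
    "\<And>r. r \<in> {s..t} \<Longrightarrow> norm (ww y r) \<le> Bw"
proof -
  have cu: "continuous_on {s..t} (uu y)" "continuous_on {s..t} (ww y)"
    using sol(1)[of y] sol(2)[of y] assms by (auto intro: continuous_on_subset)
  obtain B1 where B1: "\<forall>x\<in>uu y ` {s..t}. norm x \<le> B1"
    using compact_imp_bounded[OF compact_continuous_image[OF cu(1) compact_Icc]] bounded_iff by metis
  obtain B2 where B2: "\<forall>x\<in>ww y ` {s..t}. norm x \<le> B2"
    using compact_imp_bounded[OF compact_continuous_image[OF cu(2) compact_Icc]] bounded_iff by metis
  show ?thesis using that[of "max B1 0" "max B2 0"] B1 B2 by force
qed

lemma Dd_int: "0 \<le> s \<Longrightarrow> s \<le> t \<Longrightarrow> Dd y integrable_on {s..t}"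
  using integrable_subinterval_real[OF energy(1)[of t y]] by auto

lemma cont_int: "continuous_on {0..} f \<Longrightarrow> 0 \<le> s \<Longrightarrow> (f::real\<Rightarrow>real) integrable_on {s..t}"
  by (rule integrable_continuous_interval) (auto intro: continuous_on_subset)

lemma mult_ineq:
  assumes st: "0 \<le> s" "s \<le> t"
    and Gi: "G integrable_on {s..t}"
    and GB: "AE r in lborel. r \<in> {s..t} \<longrightarrow> (norm (ww y r))\<^sup>2 + gg y r (uu y r) \<le> G r"
  shows "Psi y t - Psi y s \<le> integral {s..t} G"
proof -
  obtain Bu Bw where B: "Bu \<ge> 0" "Bw \<ge> 0" "\<And>r. r \<in> {s..t} \<Longrightarrow> norm (uu y r) \<le> Bu"
    "\<And>r. r \<in> {s..t} \<Longrightarrow> norm (ww y r) \<le> Bw" using traj_bounds[OF st(1)] by blast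
  obtain Ci where Ci: "Ci > 0" "\<And>x. norm (\<iota> x) \<le> Ci * norm x" using Ci by blast
  obtain BF where BF: "BF \<ge> 0" "\<And>x. norm x \<le> Bu \<Longrightarrow> norm (F x) \<le> BF" using F_bdd by blast
  obtain M where M: "M \<ge> 0" "\<And>v z. norm (\<iota> v) \<le> Bw \<Longrightarrow> \<bar>blinfun_apply (D v) z\<bar> \<le> M * (1 + blinfun_apply (D v) v) * norm z"
    using D_norm_bound by blast
  define \<Lambda> where "\<Lambda> r = Bu + BF * Ci + k * M * (1 + Dd y r)" for r
  have \<Lambda>0: "\<Lambda> r \<ge> 0" for r unfolding \<Lambda>_def using B BF Ci M k_pos Dd_nonneg[of y r]
    by (simp add: add_nonneg_nonneg mult_nonneg_nonneg)
  have \<Lambda>i: "\<Lambda> integrable_on {s..t}"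
    unfolding \<Lambda>_def
    by (intro integrable_add integrable_const_ivl int_cmul_real Dd_int st)
  have \<Lambda>b: "AE r in lborel. r \<in> {s..t} \<longrightarrow> (\<forall>z. \<bar>gg y r z\<bar> \<le> \<Lambda> r * norm z)"
    using ae_range[of y]
  proof eventually_elim
    case (elim r)
    show ?case
    proof (intro impI allI)
      fix z assume r: "r \<in> {s..t}"
      then have e: "\<iota> (VV y r) = ww y r" using elim st by simp
      have t1: "\<bar>inner (uu y r) z\<bar> \<le> Bu * norm z"
        using Cauchy_Schwarz_ineq2[of "uu y r" z] B(3)[OF r] by (meson mult_right_mono norm_ge_zero order_trans)
      have t2: "\<bar>inner (F (uu y r)) (\<iota> z)\<bar> \<le> (BF * Ci) * norm z"
      proof -
        have "\<bar>inner (F (uu y r)) (\<iota> z)\<bar> \<le> norm (F (uu y r)) * norm (\<iota> z)" by (rule Cauchy_Schwarz_ineq2)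
        also have "\<dots> \<le> BF * (Ci * norm z)" using BF(2)[OF B(3)[OF r]] Ci(2)[of z] BF(1)
          by (intro mult_mono) auto
        finally show ?thesis by (simp add: mult.assoc)
      qed
      have t3: "\<bar>k * blinfun_apply (D (VV y r)) z\<bar> \<le> k * M * (1 + Dd y r) * norm z"
      proof -
        have "norm (\<iota> (VV y r)) \<le> Bw" using e B(4)[OF r] by simp
        from M(2)[OF this, of z] have "\<bar>blinfun_apply (D (VV y r)) z\<bar> \<le> M * (1 + Dd y r) * norm z"
          unfolding Dd_def .
        then show ?thesis using k_pos by (simp add: abs_mult mult.assoc)
      qed
      have "\<bar>gg y r z\<bar> \<le> \<bar>inner (uu y r) z\<bar> + \<bar>k * blinfun_apply (D (VV y r)) z\<bar> + \<bar>inner (F (uu y r)) (\<iota> z)\<bar>"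
        unfolding gg_def by linarith
      also have "\<dots> \<le> \<Lambda> r * norm z" using t1 t2 t3 unfolding \<Lambda>_def by (simp add: algebra_simps)
      finally show "\<bar>gg y r z\<bar> \<le> \<Lambda> r * norm z" .
    qed
  qed
  have cu: "continuous_on {s..t} (uu y)" "continuous_on {s..t} (ww y)"
    using sol(1)[of y] sol(2)[of y] st by (auto intro: continuous_on_subset)
  have ucu: "uniformly_continuous_on {s..t} (uu y)" "uniformly_continuous_on {s..t} (ww y)"
    using compact_uniformly_continuous[OF cu(1)] compact_uniformly_continuous[OF cu(2)] by auto
  have local: "\<exists>h>0. \<forall>a b. s \<le> a \<longrightarrow> a \<le> b \<longrightarrow> b \<le> t \<longrightarrow> b - a \<le> h \<longrightarrow>
      Psi y b - Psi y a \<le> integral {a..b} (\<lambda>r. G r + e * \<Lambda> r + e)" if e: "e > 0" for e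
  proof -
    obtain d1 where d1: "d1 > 0" "\<forall>x\<in>{s..t}. \<forall>x'\<in>{s..t}. dist x' x < d1 \<longrightarrow> dist (uu y x') (uu y x) < e"
      using ucu(1) e unfolding uniformly_continuous_on_def by blast
    have e2: "e / (Bw + 1) > 0" using e B by simp
    obtain d2 where d2: "d2 > 0" "\<forall>x\<in>{s..t}. \<forall>x'\<in>{s..t}. dist x' x < d2 \<longrightarrow> dist (ww y x') (ww y x) < e / (Bw + 1)"
      using ucu(2) e2 unfolding uniformly_continuous_on_def by blast
    define h where "h = min d1 d2 / 2"
    have h: "h > 0" "h < d1" "h < d2" using d1 d2 by (auto simp: h_def)
    have "Psi y b - Psi y a \<le> integral {a..b} (\<lambda>r. G r + e * \<Lambda> r + e)"
      if ab: "s \<le> a" "a \<le> b" "b \<le> t" "b - a \<le> h" for a b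
    proof -
      have a0: "0 \<le> a" using ab st by simp
      have sub: "{a..b} \<subseteq> {s..t}" using ab by auto
      have gi: "(\<lambda>r. gg y r (uu y a)) integrable_on {0..b}" using sol(5) a0 ab by simp
      have gia: "(\<lambda>r. gg y r (uu y a)) integrable_on {a..b}"
        using integrable_subinterval_real[OF gi] a0 by simp
      have W1: "inner (ww y b - ww y a) (\<iota> (uu y a)) = integral {a..b} (\<lambda>r. gg y r (uu y a))"
      proof -
        have "integral {0..a} (\<lambda>r. gg y r (uu y a)) + integral {a..b} (\<lambda>r. gg y r (uu y a))
              = integral {0..b} (\<lambda>r. gg y r (uu y a))"
          using Henstock_Kurzweil_Integration.integral_combine[OF a0 ab(2) gi] .
        then show ?thesis using sol(6)[of a y "uu y a"] sol(6)[of b y "uu y a"] a0 ab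
          by (simp add: inner_diff_left)
      qed
      have der: "((\<lambda>s. inner (ww y b) (\<iota> (uu y s))) has_vector_derivative inner (ww y b) (ww y x)) (at x within {a..b})"
        if x: "x \<in> {a..b}" for x
        using bounded_linear.has_vector_derivative[OF bounded_linear_inner_right,
            OF has_vector_derivative_within_subset[OF sol(3)[of x y], of "{a..b}"]] x a0 by auto
      have "((\<lambda>r. inner (ww y b) (ww y r)) has_integral inner (ww y b) (\<iota> (uu y b) - \<iota> (uu y a))) {a..b}"
        using fundamental_theorem_of_calculus[of a b "\<lambda>s. inner (ww y b) (\<iota> (uu y s))", OF ab(2) der]
        by (simp add: inner_diff_right)
      then have W2: "inner (ww y b) (\<iota> (uu y b) - \<iota> (uu y a)) = integral {a..b} (\<lambda>r. inner (ww y b) (ww y r))"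
        by (simp add: integral_unique)
      have PsiW: "Psi y b - Psi y a = inner (ww y b - ww y a) (\<iota> (uu y a)) + inner (ww y b) (\<iota> (uu y b) - \<iota> (uu y a))"
        unfolding Psi_def by (simp add: inner_diff_left inner_diff_right)
      have nwi: "(\<lambda>r. (norm (ww y r))\<^sup>2) integrable_on {a..b}"
        by (rule cont_int[OF _ a0]) (intro continuous_intros sol(2))
      have iwi: "(\<lambda>r. inner (ww y b) (ww y r)) integrable_on {a..b}"
        by (rule cont_int[OF _ a0]) (intro continuous_intros sol(2))
      have Gab: "G integrable_on {a..b}" using integrable_subinterval_real[OF Gi sub] .
      have \<Lambda>ab: "\<Lambda> integrable_on {a..b}" using integrable_subinterval_real[OF \<Lambda>i sub] .
      have i1: "(\<lambda>r. G r - (norm (ww y r))\<^sup>2 + e * \<Lambda> r) integrable_on {a..b}"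
        by (intro integrable_add integrable_diff int_cmul_real Gab nwi \<Lambda>ab)
      have i2: "(\<lambda>r. (norm (ww y r))\<^sup>2 + e) integrable_on {a..b}"
        by (intro integrable_add integrable_const_ivl nwi)
      have B1: "integral {a..b} (\<lambda>r. gg y r (uu y a)) \<le> integral {a..b} (\<lambda>r. G r - (norm (ww y r))\<^sup>2 + e * \<Lambda> r)"
      proof (rule integral_le_AE[OF gia i1])
        show "AE r in lborel. r \<in> {a..b} \<longrightarrow> gg y r (uu y a) \<le> G r - (norm (ww y r))\<^sup>2 + e * \<Lambda> r"
          using GB \<Lambda>b
        proof eventually_elim
          case (elim r)
          show ?case
          proof
            assume r: "r \<in> {a..b}"
            then have rs: "r \<in> {s..t}" using sub by auto
            have "dist (uu y r) (uu y a) < e" using d1(2) rs ab h r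
              by (metis atLeastAtMost_iff dist_real_def abs_of_nonneg diff_ge_0_iff_ge order_trans less_le_trans linorder_not_le order.strict_trans1 order_le_less_trans diff_right_mono)
            then have nd: "norm (uu y a - uu y r) \<le> e" by (simp add: dist_norm norm_minus_commute)
            have "gg y r (uu y a) = gg y r (uu y r) + gg y r (uu y a - uu y r)" by (simp add: gg_diff)
            also have "\<dots> \<le> gg y r (uu y r) + \<Lambda> r * norm (uu y a - uu y r)"
              using elim(2) rs by (smt (verit))
            also have "\<dots> \<le> gg y r (uu y r) + \<Lambda> r * e" using \<Lambda>0[of r] nd by (simp add: mult_left_mono)
            finally show "gg y r (uu y a) \<le> G r - (norm (ww y r))\<^sup>2 + e * \<Lambda> r"
              using elim(1) rs by (simp add: mult.commute)
          qed
        qed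
      qed
      have B2: "integral {a..b} (\<lambda>r. inner (ww y b) (ww y r)) \<le> integral {a..b} (\<lambda>r. (norm (ww y r))\<^sup>2 + e)"
      proof (rule integral_le[OF iwi i2])
        fix r assume r: "r \<in> {a..b}"
        then have rs: "r \<in> {s..t}" using sub by auto
        have bs: "b \<in> {s..t}" using ab st by auto
        have "dist (ww y b) (ww y r) < e / (Bw + 1)" using d2(2) rs bs ab h r
          by (metis atLeastAtMost_iff dist_real_def abs_of_nonneg diff_ge_0_iff_ge order_trans less_le_trans linorder_not_le order.strict_trans1 order_le_less_trans diff_left_mono)
        then have nd: "norm (ww y b - ww y r) \<le> e / (Bw + 1)" by (simp add: dist_norm)
        have "inner (ww y b) (ww y r) = (norm (ww y r))\<^sup>2 + inner (ww y b - ww y r) (ww y r)"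
          by (simp add: inner_diff_left power2_norm_eq_inner)
        also have "inner (ww y b - ww y r) (ww y r) \<le> norm (ww y b - ww y r) * norm (ww y r)"
          by (rule norm_cauchy_schwarz)
        also have "\<dots> \<le> e / (Bw + 1) * Bw" using nd B(4)[OF rs] e2 by (intro mult_mono) auto
        also have "\<dots> \<le> e" using e B(2) by (simp add: field_simps)
        finally show "inner (ww y b) (ww y r) \<le> (norm (ww y r))\<^sup>2 + e" by simp
      qed
      have "integral {a..b} (\<lambda>r. G r - (norm (ww y r))\<^sup>2 + e * \<Lambda> r) + integral {a..b} (\<lambda>r. (norm (ww y r))\<^sup>2 + e)
           = integral {a..b} (\<lambda>r. G r + e * \<Lambda> r + e)"
        using integral_add[OF i1 i2, symmetric] by (simp add: algebra_simps)
      then show ?thesis using PsiW W1 W2 B1 B2 by linarith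
    qed
    then show ?thesis using h by blast
  qed
  have fin: "Psi y t - Psi y s \<le> integral {s..t} G + e * (integral {s..t} \<Lambda> + (t - s))" if e: "e > 0" for e
  proof -
    obtain h where h: "h > 0" "\<forall>a b. s \<le> a \<longrightarrow> a \<le> b \<longrightarrow> b \<le> t \<longrightarrow> b - a \<le> h \<longrightarrow>
      Psi y b - Psi y a \<le> integral {a..b} (\<lambda>r. G r + e * \<Lambda> r + e)" using local[OF e] by blast
    have ii: "(\<lambda>r. G r + e * \<Lambda> r + e) integrable_on {s..t}"
      by (intro integrable_add int_cmul_real integrable_const_ivl Gi \<Lambda>i)
    have "Psi y t - Psi y s \<le> integral {s..t} (\<lambda>r. G r + e * \<Lambda> r + e)"
    proof (rule chain_le[where I = "\<lambda>a b. integral {a..b} (\<lambda>r. G r + e * \<Lambda> r + e)", OF _ h(1) _ st(2)])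
      fix a b c assume abc: "s \<le> a" "a \<le> b" "b \<le> c" "c \<le> t"
      have "(\<lambda>r. G r + e * \<Lambda> r + e) integrable_on {a..c}"
        using integrable_subinterval_real[OF ii, of a c] abc by simp
      from Henstock_Kurzweil_Integration.integral_combine[OF abc(2,3) this]
      show "integral {a..c} (\<lambda>r. G r + e * \<Lambda> r + e) = integral {a..b} (\<lambda>r. G r + e * \<Lambda> r + e) + integral {b..c} (\<lambda>r. G r + e * \<Lambda> r + e)"
        by simp
    next
      fix a b assume "s \<le> a" "a \<le> b" "b \<le> t" "b - a \<le> h"
      then show "Psi y b - Psi y a \<le> integral {a..b} (\<lambda>r. G r + e * \<Lambda> r + e)" using h(2) by blast
    qed
    also have "integral {s..t} (\<lambda>r. G r + e * \<Lambda> r + e) = integral {s..t} G + e * (integral {s..t} \<Lambda> + (t - s))"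
    proof -
      have j1: "(\<lambda>r. e * \<Lambda> r) integrable_on {s..t}" by (rule int_cmul_real[OF \<Lambda>i])
      have j2: "(\<lambda>r. G r + e * \<Lambda> r) integrable_on {s..t}" by (rule integrable_add[OF Gi j1])
      have "integral {s..t} (\<lambda>r. G r + e * \<Lambda> r + e) = integral {s..t} (\<lambda>r. G r + e * \<Lambda> r) + integral {s..t} (\<lambda>r. e)"
        by (rule integral_add[OF j2 integrable_const_ivl])
      also have "integral {s..t} (\<lambda>r. G r + e * \<Lambda> r) = integral {s..t} G + e * integral {s..t} \<Lambda>"
        using integral_add[OF Gi j1] by simp
      also have "integral {s..t} (\<lambda>r. e) = e * (t - s)" using st by simp
      finally show ?thesis by (simp add: algebra_simps)
    qed
    finally show ?thesis .
  qed
  define X where "X = integral {s..t} \<Lambda> + (t - s)"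
  show ?thesis
  proof (rule ccontr)
    assume c: "\<not> ?thesis"
    define q where "q = Psi y t - Psi y s - integral {s..t} G"
    have q: "q > 0" using c by (simp add: q_def)
    have X0: "X \<ge> 0" unfolding X_def using st integral_nonneg[OF \<Lambda>i] \<Lambda>0 by force
    define e where "e = q / (2 * (X + 1))"
    have e: "e > 0" using q X0 by (simp add: e_def)
    have "q \<le> e * X" using fin[OF e] unfolding q_def X_def by simp
    also have "\<dots> < q"
    proof -
      have f1: "X / (2 * (X + 1)) \<le> 1 / 2" using X0 by (simp add: divide_simps)
      have "e * X = q * (X / (2 * (X + 1)))" by (simp add: e_def)
      also have "\<dots> \<le> q * (1/2)" using f1 q by (intro mult_left_mono) auto
      finally show ?thesis using q by simp
    qed
    finally show False by simp
  qed
qed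

end

context diss begin

definition "\<theta> = min (c2/2) ((1 - \<eta>2)/2)"
definition "rhoR R = (1 + 2 * R + 2 * cP) powr \<gamma>"

lemma theta: "0 < \<theta>" "\<theta> \<le> c2/2" "\<theta> \<le> (1 - \<eta>2)/2"
proof -
  show "0 < \<theta>" using ab2 unfolding \<theta>_def by simp
  show "\<theta> \<le> c2/2" unfolding \<theta>_def by (rule min.cobounded1)
  show "\<theta> \<le> (1 - \<eta>2)/2" unfolding \<theta>_def by (rule min.cobounded2)
qed

lemma G_bound:
  assumes R: "\<forall>r\<in>{s..t}. En y r \<le> R" and s: "0 \<le> s"
  shows "AE r in lborel. r \<in> {s..t} \<longrightarrow> (norm (ww y r))\<^sup>2 + gg y r (uu y r)
            \<le> 2 * c0 + \<theta> * cP + c3 - \<theta> * En y r + (2 * c1 + c4 * rhoR R) * Dd y r"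
  using ae_range[of y]
proof eventually_elim
  case (elim r)
  show ?case
  proof
    assume r: "r \<in> {s..t}"
    then have e: "\<iota> (VV y r) = ww y r" using elim s by simp
    define U where "U = uu y r"
    define w where "w = ww y r"
    define Vv where "Vv = VV y r"
    have h1: "- k * blinfun_apply (D Vv) U + inner (N U) (\<iota> U)
          \<le> blinfun_apply (Pi' U) U + \<eta>2 * (norm U)\<^sup>2 - c2 * Pi0 U + c3
             + c4 * (1 + energy_E Pi0 U (\<iota> Vv)) powr \<gamma> * blinfun_apply (D Vv) Vv" using ab2(6) by blast
    have h2: "inner (F U) (\<iota> U) = - blinfun_apply (Pi' U) U + inner (N U) (\<iota> U)" using F_decomp by blast
    have gg: "gg y r U = - (norm U)\<^sup>2 - k * blinfun_apply (D Vv) U + inner (F U) (\<iota> U)"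
      unfolding gg_def U_def Vv_def by (simp add: power2_norm_eq_inner)
    have EE: "energy_E Pi0 U (\<iota> Vv) \<le> 2 * En y r + 2 * cP"
      using E_bounds(1)[of U w] e unfolding En_def U_def w_def Vv_def by simp
    have EE0: "0 \<le> energy_E Pi0 U (\<iota> Vv)" unfolding energy_E_def using Pi0_nonneg by (simp add: add_nonneg_nonneg)
    have ER: "En y r \<le> R" using R r by blast
    have pw: "(1 + energy_E Pi0 U (\<iota> Vv)) powr \<gamma> \<le> rhoR R"
      unfolding rhoR_def using EE EE0 ER gam by (intro powr_mono2) auto
    have Ddv: "Dd y r = blinfun_apply (D Vv) Vv" unfolding Dd_def Vv_def ..
    have h3: "c4 * (1 + energy_E Pi0 U (\<iota> Vv)) powr \<gamma> * blinfun_apply (D Vv) Vv \<le> c4 * rhoR R * Dd y r"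
      unfolding Ddv using pw ab2(5) D_nonneg[of Vv] by (intro mult_right_mono mult_left_mono) auto
    have Pi1b: "\<bar>Pi1 U\<bar> \<le> 1/4 * ((norm U)\<^sup>2 + Pi0 U) + cP" using Pi1_b by blast
    have h4: "- c2 * Pi0 U \<le> - \<theta> * (Pi0 U + Pi1 U - (norm U)\<^sup>2 / 4 - cP)"
    proof -
      have "Pi0 U + Pi1 U - (norm U)\<^sup>2 / 4 - cP \<le> 5/4 * Pi0 U" using conjunct1[OF Pi1b[unfolded abs_le_iff]] by argo
      then have "\<theta> * (Pi0 U + Pi1 U - (norm U)\<^sup>2 / 4 - cP) \<le> \<theta> * (5/4 * Pi0 U)"
        using theta(1) by (intro mult_left_mono) auto
      also have "\<dots> = (\<theta> * (5/4)) * Pi0 U" by simp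
      also have "\<dots> \<le> c2 * Pi0 U" using theta(2) ab2(3) Pi0_nonneg[rule_format, of U] by (intro mult_right_mono) auto
      finally show ?thesis by simp
    qed
    have EnU: "En y r = 1/2 * ((norm U)\<^sup>2 + (norm w)\<^sup>2) + (Pi0 U + Pi1 U)"
      unfolding En_def energy_full_def energy_E_def U_def w_def by simp
    have h5: "(norm w)\<^sup>2 \<le> c0 + c1 * Dd y r" using ab1(3) e unfolding Ddv w_def Vv_def by metis
    have th: "0 < \<theta>" "\<theta> \<le> (1 - \<eta>2)/2" using theta by auto
    have U0: "0 \<le> (norm U)\<^sup>2" "0 \<le> (norm w)\<^sup>2" by simp_all
    have s1: "- k * blinfun_apply (D Vv) U + inner (F U) (\<iota> U) \<le> \<eta>2 * (norm U)\<^sup>2 - c2 * Pi0 U + c3 + c4 * rhoR R * Dd y r"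
      using h1 h2 h3 by linarith
    have e1: "Pi0 U + Pi1 U - (norm U)\<^sup>2 / 4 - cP = En y r - 3/4 * (norm U)\<^sup>2 - (norm w)\<^sup>2 / 2 - cP"
      using EnU by argo
    have s2: "- c2 * Pi0 U \<le> - \<theta> * En y r + \<theta> * (3/4 * (norm U)\<^sup>2) + \<theta> * ((norm w)\<^sup>2 / 2) + \<theta> * cP"
      using h4 unfolding e1 by (simp add: algebra_simps)
    have s3: "\<theta> * (3/4 * (norm U)\<^sup>2) \<le> (norm U)\<^sup>2 - \<eta>2 * (norm U)\<^sup>2"
    proof -
      have "\<theta> * (3/4) \<le> 1 - \<eta>2" using th ab2(2) by argo
      then have "(\<theta> * (3/4)) * (norm U)\<^sup>2 \<le> (1 - \<eta>2) * (norm U)\<^sup>2" using U0 by (intro mult_right_mono) auto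
      then show ?thesis by (simp add: algebra_simps)
    qed
    have s4: "\<theta> * ((norm w)\<^sup>2 / 2) \<le> (norm w)\<^sup>2 / 2"
    proof -
      have "\<theta> \<le> 1" using th ab2(1) by argo
      then show ?thesis using U0 th by (intro mult_left_le_one_le) auto
    qed
    have "(norm w)\<^sup>2 + gg y r U \<le> 2 * c0 + \<theta> * cP + c3 - \<theta> * En y r + (2 * c1 * Dd y r + c4 * rhoR R * Dd y r)"
      unfolding gg using s1 s2 s3 s4 h5 U0 by linarith
    then have "(norm w)\<^sup>2 + gg y r U \<le> 2 * c0 + \<theta> * cP + c3 - \<theta> * En y r + (2 * c1 + c4 * rhoR R) * Dd y r"
      by (simp add: algebra_simps)
    then show "(norm (ww y r))\<^sup>2 + gg y r (uu y r) \<le> 2 * c0 + \<theta> * cP + c3 - \<theta> * En y r + (2 * c1 + c4 * rhoR R) * Dd y r"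
      unfolding U_def w_def .
  qed
qed

definition "Cemb = (SOME C. C > 0 \<and> (\<forall>x. norm (\<iota> x) \<le> C * norm x))"

lemma Cemb: "Cemb > 0" "norm (\<iota> x) \<le> Cemb * norm x"
proof -
  have ex: "\<exists>C. C > 0 \<and> (\<forall>x. norm (\<iota> x) \<le> C * norm x)" using Ci by metis
  have "Cemb > 0 \<and> (\<forall>x. norm (\<iota> x) \<le> Cemb * norm x)"
    unfolding Cemb_def by (rule someI_ex[OF ex])
  then show "Cemb > 0" "norm (\<iota> x) \<le> Cemb * norm x" by auto
qed

lemma Psi_bound: "\<bar>Psi y t\<bar> \<le> Cemb * (2 * En y t + 2 * cP)"
proof -
  define U where "U = uu y t"
  define w where "w = ww y t"
  have "\<bar>Psi y t\<bar> \<le> norm w * norm (\<iota> U)" unfolding Psi_def U_def w_def by (rule Cauchy_Schwarz_ineq2)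
  also have "\<dots> \<le> norm w * (Cemb * norm U)" using Cemb(2)[of U] by (simp add: mult_left_mono)
  also have "\<dots> = Cemb * (norm w * norm U)" by simp
  also have "\<dots> \<le> Cemb * (((norm U)\<^sup>2 + (norm w)\<^sup>2) / 2)"
  proof -
    have "0 \<le> (norm U - norm w)\<^sup>2" by simp
    then have "norm w * norm U \<le> ((norm U)\<^sup>2 + (norm w)\<^sup>2) / 2" by (simp add: power2_diff algebra_simps)
    then show ?thesis using Cemb(1) by (simp add: mult_left_mono)
  qed
  also have "\<dots> \<le> Cemb * energy_E Pi0 U w" using E_bounds(4)[of U w] Cemb(1) by (intro mult_left_mono) auto
  also have "\<dots> \<le> Cemb * (2 * En y t + 2 * cP)" using E_bounds(1)[of U w] Cemb(1)
    unfolding En_def U_def w_def by (intro mult_left_mono) auto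
  finally show ?thesis .
qed

definition "Vf \<epsilon> y t = En y t + \<epsilon> * Psi y t"
definition "Kc \<epsilon> = 2 * (\<epsilon> * \<theta> / 4) * cP + b (1 / (\<epsilon> * \<theta> / 4)) + \<epsilon> * (2 * c0 + \<theta> * cP + c3) + \<epsilon> * \<theta> * cP / 10"

lemma Vf_cont: "continuous_on {0..} (Vf \<epsilon> y)"
  unfolding Vf_def[abs_def] by (intro continuous_intros En_cont Psi_cont)

lemma Vf_bounds:
  assumes "0 \<le> \<epsilon>" "\<epsilon> * Cemb \<le> 1/8"
  shows "Vf \<epsilon> y t \<le> 5/4 * En y t + cP/4" "3/4 * En y t - cP/4 \<le> Vf \<epsilon> y t"
proof -
  have p: "\<bar>\<epsilon> * Psi y t\<bar> \<le> \<epsilon> * (Cemb * (2 * En y t + 2 * cP))"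
    using Psi_bound[of y t] assms(1) by (simp add: abs_mult mult_left_mono)
  have q: "0 \<le> 2 * En y t + 2 * cP" using E_bounds(3)[of "uu y t" "ww y t"] unfolding En_def by simp
  have "\<epsilon> * (Cemb * (2 * En y t + 2 * cP)) = (\<epsilon> * Cemb) * (2 * En y t + 2 * cP)" by simp
  also have "\<dots> \<le> 1/8 * (2 * En y t + 2 * cP)" using assms(2) q by (intro mult_right_mono) auto
  finally have "\<bar>\<epsilon> * Psi y t\<bar> \<le> 1/8 * (2 * En y t + 2 * cP)" using p by linarith
  then show "Vf \<epsilon> y t \<le> 5/4 * En y t + cP/4" "3/4 * En y t - cP/4 \<le> Vf \<epsilon> y t"
    unfolding Vf_def abs_le_iff by argo+
qed

lemma V_ineq:
  assumes st: "0 \<le> s" "s \<le> t" and R: "\<forall>r\<in>{s..t}. En y r \<le> R"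
    and eps: "0 < \<epsilon>" "\<epsilon> * Cemb \<le> 1/8" "\<epsilon> * \<theta> \<le> 4" "\<epsilon> * (2*c1 + c4 * rhoR R) \<le> k*(1-\<eta>3)"
  shows "Vf \<epsilon> y t - Vf \<epsilon> y s \<le> integral {s..t} (\<lambda>r. Kc \<epsilon> - (2*\<epsilon>*\<theta>/5) * Vf \<epsilon> y r)"
proof -
  define \<delta> where "\<delta> = \<epsilon> * \<theta> / 4"
  have d: "0 < \<delta>" "\<delta> \<le> 1" using eps theta(1) by (auto simp: \<delta>_def)
  define f1 where "f1 r = \<eta>3 * k * Dd y r + \<delta> * (2 * En y r + 2 * cP) + b (1/\<delta>)" for r
  define G where "G r = 2 * c0 + \<theta> * cP + c3 - \<theta> * En y r + (2 * c1 + c4 * rhoR R) * Dd y r" for r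
  have Ddi: "Dd y integrable_on {s..t}" using Dd_int st by blast
  have Eni: "En y integrable_on {s..t}" using cont_int[OF En_cont st(1)] .
  have Nvi: "Nv y integrable_on {s..t}" using integrable_subinterval_real[OF energy(2)[of t y]] st by simp
  have f1i: "f1 integrable_on {s..t}" unfolding f1_def
    by (intro integrable_add int_cmul_real integrable_const_ivl Ddi Eni)
  have Gi: "G integrable_on {s..t}" unfolding G_def
    by (intro integrable_add integrable_diff int_cmul_real integrable_const_ivl Ddi Eni)
  have Vi: "(\<lambda>r. Kc \<epsilon> - (2*\<epsilon>*\<theta>/5) * Vf \<epsilon> y r) integrable_on {s..t}"
    by (intro integrable_diff int_cmul_real integrable_const_ivl cont_int[OF Vf_cont st(1)])
  have E1: "En y t - En y s = - k * integral {s..t} (Dd y) + integral {s..t} (Nv y)" using En_diff st by blast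
  have E2: "integral {s..t} (Nv y) \<le> integral {s..t} f1"
  proof (rule integral_le_AE[OF Nvi f1i])
    show "AE x in lborel. x \<in> {s..t} \<longrightarrow> Nv y x \<le> f1 x"
      using Nv_bound[OF d, of y] by eventually_elim (use st in \<open>auto simp: f1_def \<delta>_def\<close>)
  qed
  have P1: "Psi y t - Psi y s \<le> integral {s..t} G"
    by (rule mult_ineq[OF st Gi]) (use G_bound[OF R st(1)] in \<open>simp add: G_def\<close>)
  have lin: "integral {s..t} (\<lambda>r. - k * Dd y r + f1 r + \<epsilon> * G r) = - k * integral {s..t} (Dd y) + integral {s..t} f1 + \<epsilon> * integral {s..t} G"
  proof -
    have a: "(\<lambda>r. - k * Dd y r) integrable_on {s..t}" by (rule int_cmul_real[OF Ddi])
    have c: "(\<lambda>r. \<epsilon> * G r) integrable_on {s..t}" by (rule int_cmul_real[OF Gi])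
    have "integral {s..t} (\<lambda>r. - k * Dd y r + f1 r + \<epsilon> * G r) = integral {s..t} (\<lambda>r. - k * Dd y r + f1 r) + integral {s..t} (\<lambda>r. \<epsilon> * G r)"
      by (rule integral_add[OF integrable_add[OF a f1i] c])
    also have "integral {s..t} (\<lambda>r. - k * Dd y r + f1 r) = integral {s..t} (\<lambda>r. - k * Dd y r) + integral {s..t} f1"
      by (rule integral_add[OF a f1i])
    finally show ?thesis by (simp add: integral_mult_right)
  qed
  have lhs_i: "(\<lambda>r. - k * Dd y r + f1 r + \<epsilon> * G r) integrable_on {s..t}"
    by (intro integrable_add int_cmul_real Ddi f1i Gi)
  have pw: "- k * Dd y r + f1 r + \<epsilon> * G r \<le> Kc \<epsilon> - (2*\<epsilon>*\<theta>/5) * Vf \<epsilon> y r" for r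
  proof -
    have D0: "0 \<le> Dd y r" by (rule Dd_nonneg)
    have dd: "\<epsilon> * ((2 * c1 + c4 * rhoR R) * Dd y r) \<le> k * (1 - \<eta>3) * Dd y r"
      using mult_right_mono[OF eps(4) D0] by (simp add: mult.assoc)
    have ee: "\<epsilon> * (\<theta> * En y r) = 4 * (\<delta> * En y r)" by (simp add: \<delta>_def)
    have vb: "Vf \<epsilon> y r \<le> 5/4 * En y r + cP/4" using Vf_bounds(1)[of \<epsilon> y r] eps by simp
    have ep: "0 \<le> \<delta>" using d by simp
    have vv: "\<delta> * Vf \<epsilon> y r \<le> \<delta> * (5/4 * En y r + cP/4)" using mult_left_mono[OF vb ep] .
    have kk: "Kc \<epsilon> = 2 * (\<delta> * cP) + b (1 / \<delta>) + \<epsilon> * (2 * c0 + \<theta> * cP + c3) + 2 * (\<delta> * cP) / 5"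
      unfolding Kc_def \<delta>_def by simp
    have aa: "(2*\<epsilon>*\<theta>/5) * Vf \<epsilon> y r = 8/5 * (\<delta> * Vf \<epsilon> y r)" by (simp add: \<delta>_def)
    have G': "\<epsilon> * G r = \<epsilon> * (2 * c0 + \<theta> * cP + c3) - \<epsilon> * (\<theta> * En y r) + \<epsilon> * ((2 * c1 + c4 * rhoR R) * Dd y r)"
      unfolding G_def by (simp add: algebra_simps)
    have f1': "f1 r = \<eta>3 * k * Dd y r + 2 * (\<delta> * En y r) + 2 * (\<delta> * cP) + b (1/\<delta>)"
      unfolding f1_def by (simp add: algebra_simps)
    have kd: "k * (1 - \<eta>3) * Dd y r = k * Dd y r - \<eta>3 * k * Dd y r" by (simp add: algebra_simps)
    have dv: "\<delta> * (5/4 * En y r + cP/4) = 5/4 * (\<delta> * En y r) + (\<delta> * cP) / 4" by (simp add: algebra_simps)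
    show ?thesis unfolding G' f1' kk aa using dd ee vv kd dv by linarith
  qed
  have "Vf \<epsilon> y t - Vf \<epsilon> y s = (En y t - En y s) + \<epsilon> * (Psi y t - Psi y s)" unfolding Vf_def by (simp add: algebra_simps)
  also have "\<dots> \<le> - k * integral {s..t} (Dd y) + integral {s..t} f1 + \<epsilon> * integral {s..t} G"
  proof -
    have "\<epsilon> * (Psi y t - Psi y s) \<le> \<epsilon> * integral {s..t} G" using mult_left_mono[OF P1, of \<epsilon>] eps(1) by simp
    then show ?thesis using E1 E2 by linarith
  qed
  also have "\<dots> = integral {s..t} (\<lambda>r. - k * Dd y r + f1 r + \<epsilon> * G r)" using lin by simp
  also have "\<dots> \<le> integral {s..t} (\<lambda>r. Kc \<epsilon> - (2*\<epsilon>*\<theta>/5) * Vf \<epsilon> y r)"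
    by (rule integral_le[OF lhs_i Vi pw])
  finally show ?thesis .
qed

end

lemma stay_below_T:
  fixes W :: "real \<Rightarrow> real"
  assumes cont: "continuous_on {s1..T} W" and alpha: "\<alpha> > 0"
    and ineq: "\<And>a b. s1 \<le> a \<Longrightarrow> a \<le> b \<Longrightarrow> b \<le> T \<Longrightarrow> W b - W a \<le> - \<alpha> * integral {a..b} W"
    and W0: "W s1 \<le> M" and M: "0 \<le> M" and t: "s1 \<le> t" "t \<le> T"
  shows "W t \<le> M"
proof (rule ccontr)
  assume Wt: "\<not> W t \<le> M"
  define A where "A = {s1..t} \<inter> W -` {..M}"
  have cA: "closed A" unfolding A_def
    by (rule continuous_closed_preimage) (use t in \<open>auto intro: continuous_on_subset[OF cont]\<close>)
  have s1A: "s1 \<in> A" using W0 t by (auto simp: A_def)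
  have bA: "bdd_above A" by (auto simp: A_def bdd_above_def)
  define s2 where "s2 = Sup A"
  have s2A: "s2 \<in> A" unfolding s2_def using closed_contains_Sup[OF _ bA cA] s1A by blast
  have s2le: "\<And>r. r \<in> A \<Longrightarrow> r \<le> s2" unfolding s2_def using bA by (simp add: cSup_upper)
  have s2t: "s1 \<le> s2" "s2 \<le> t" "W s2 \<le> M" using s2A by (auto simp: A_def)
  have cs: "continuous_on {s2..t} W" by (rule continuous_on_subset[OF cont]) (use s2t t in auto)
  obtain r where r: "s2 \<le> r" "r \<le> t" "W r = M" using IVT'[of W s2 M t] s2t Wt cs by auto
  have "r \<in> A" using r s2t by (auto simp: A_def)
  then have "r = s2" using s2le r by force
  then have Ws2: "W s2 = M" using r by simp
  have ge: "\<And>x. x \<in> {s2..t} \<Longrightarrow> M \<le> W x"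
  proof -
    fix x assume x: "x \<in> {s2..t}"
    show "M \<le> W x"
    proof (cases "x \<in> A")
      case True then have "x = s2" using s2le x by force
      then show ?thesis using Ws2 by simp
    next
      case False then show ?thesis using x s2t by (auto simp: A_def)
    qed
  qed
  have "0 \<le> integral {s2..t} W"
    by (rule integral_nonneg[OF integrable_continuous_interval[OF cs]]) (use ge M in force)
  moreover have "0 \<le> \<alpha> * integral {s2..t} W" using calculation alpha by simp
  ultimately have "W t - W s2 \<le> 0" using ineq[of s2 t] s2t t by linarith
  then show False using Wt Ws2 by simp
qed

lemma int_shift:
  fixes V :: "real \<Rightarrow> real"
  assumes "V integrable_on {a..b}" "a \<le> b"
  shows "integral {a..b} (\<lambda>r. \<alpha> * L - \<alpha> * V r) = - \<alpha> * integral {a..b} (\<lambda>r. V r - L)"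
proof -
  have e1: "integral {a..b} (\<lambda>r. \<alpha> * L - \<alpha> * V r) = \<alpha> * L * (b - a) - \<alpha> * integral {a..b} V"
    using integral_diff[OF integrable_const_ivl int_cmul_real[OF assms(1)], of "\<alpha> * L" \<alpha>] assms(2)
    by (simp add: integral_mult_right)
  have e2: "integral {a..b} (\<lambda>r. V r - L) = integral {a..b} V - L * (b - a)"
    using integral_diff[OF assms(1) integrable_const_ivl, of L] assms(2) by simp
  show ?thesis unfolding e1 e2 by (simp add: algebra_simps)
qed

context diss begin

definition "epsR R = min (min (1/(8*Cemb)) (4/\<theta>)) (k*(1-\<eta>3)/(2*c1 + c4*rhoR R))"
definition "yR R = 4 / (epsR R * \<theta>)"
definition "LR R = Kc (epsR R) / (2 * epsR R * \<theta> / 5)"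
definition "CL = 3 * cP / 2 + 5 / (2 * \<theta>) * (2 * c0 + \<theta> * cP + c3)"

lemma rho_pos: "0 \<le> R \<Longrightarrow> 1 \<le> rhoR R"
  unfolding rhoR_def using cP gam by (intro ge_one_powr_ge_zero) auto

lemma epsR_pos: "0 \<le> R \<Longrightarrow> 0 < epsR R"
proof -
  assume R: "0 \<le> R"
  have "0 < 2*c1 + c4*rhoR R" using ab1(2) ab2(5) rho_pos[OF R] by (simp add: add_pos_nonneg)
  then show ?thesis unfolding epsR_def using Cemb(1) theta(1) k_pos ab3(2) by simp
qed

lemma epsR_props:
  assumes R: "0 \<le> R"
  shows "epsR R * Cemb \<le> 1/8" "epsR R * \<theta> \<le> 4" "epsR R * (2*c1 + c4 * rhoR R) \<le> k*(1-\<eta>3)"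
proof -
  have p: "0 < 2*c1 + c4*rhoR R" using ab1(2) ab2(5) rho_pos[OF R] by (simp add: add_pos_nonneg)
  have e0: "0 < epsR R" using epsR_pos[OF R] .
  have "epsR R \<le> 1/(8*Cemb)" unfolding epsR_def by simp
  then show "epsR R * Cemb \<le> 1/8" using Cemb(1) by (simp add: field_simps)
  have "epsR R \<le> 4/\<theta>" unfolding epsR_def by simp
  then show "epsR R * \<theta> \<le> 4" using theta(1) by (simp add: field_simps)
  have "epsR R \<le> k*(1-\<eta>3)/(2*c1 + c4*rhoR R)" unfolding epsR_def by simp
  then show "epsR R * (2*c1 + c4 * rhoR R) \<le> k*(1-\<eta>3)" using p by (simp add: field_simps)
qed

lemma LR_eq: assumes "0 \<le> R" shows "LR R = CL + 5/8 * (yR R * b (yR R))"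
proof -
  have e: "0 < epsR R" using epsR_pos[OF assms] .
  have t: "0 < \<theta>" using theta(1) .
  have y: "1 / (epsR R * \<theta> / 4) = yR R" unfolding yR_def by simp
  show ?thesis unfolding LR_def Kc_def CL_def y using e t
    by (simp add: field_simps yR_def)
qed

lemma yb_mono: "0 \<le> y \<Longrightarrow> y \<le> Y \<Longrightarrow> y * b y \<le> Y * b Y"
proof -
  assume y: "0 \<le> y" "y \<le> Y"
  have "b y \<le> b Y" using ab3(3) y by (auto intro: mono_onD)
  moreover have "0 \<le> b y" using ab3(4) y by auto
  ultimately show ?thesis using y by (intro mult_mono) auto
qed

lemma inv_min3: "0 < a1 \<Longrightarrow> 0 < a2 \<Longrightarrow> 0 < (a3::real) \<Longrightarrow> 1 / min (min a1 a2) a3 \<le> 1/a1 + 1/a2 + 1/a3"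
  by (cases "a1 \<le> a2"; cases "a1 \<le> a3"; cases "a2 \<le> a3") (auto simp: min_def add_pos_pos)

definition "Aconst = 4/\<theta> * (8 * Cemb + \<theta>/4 + (2*c1 + c4)/(k*(1-\<eta>3)))"

lemma yR_bound: assumes R: "0 \<le> R" shows "0 \<le> yR R" "yR R \<le> Aconst * rhoR R"
proof -
  have p: "0 < 2*c1 + c4*rhoR R" using ab1(2) ab2(5) rho_pos[OF R] by (simp add: add_pos_nonneg)
  have k1: "0 < k*(1-\<eta>3)" using k_pos ab3(2) by simp
  show "0 \<le> yR R" unfolding yR_def using epsR_pos[OF R] theta(1) by simp
  have "1 / epsR R \<le> 1/(1/(8*Cemb)) + 1/(4/\<theta>) + 1/(k*(1-\<eta>3)/(2*c1 + c4*rhoR R))"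
    unfolding epsR_def by (rule inv_min3) (use Cemb(1) theta(1) p k1 in auto)
  also have "\<dots> = 8 * Cemb + \<theta>/4 + (2*c1 + c4*rhoR R)/(k*(1-\<eta>3))" by simp
  also have "\<dots> \<le> (8 * Cemb + \<theta>/4 + (2*c1 + c4)/(k*(1-\<eta>3))) * rhoR R"
  proof -
    have r1: "1 \<le> rhoR R" using rho_pos[OF R] .
    have a: "8 * Cemb \<le> 8 * Cemb * rhoR R" using r1 Cemb(1) by simp
    have b': "\<theta>/4 \<le> \<theta>/4 * rhoR R" using r1 theta(1) by simp
    have c: "2*c1 + c4*rhoR R \<le> (2*c1 + c4) * rhoR R" using r1 ab1(2) by (simp add: algebra_simps)
    then have "(2*c1 + c4*rhoR R)/(k*(1-\<eta>3)) \<le> (2*c1 + c4) * rhoR R/(k*(1-\<eta>3))"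
      using k1 by (simp add: divide_right_mono)
    then show ?thesis using a b' by (simp add: algebra_simps)
  qed
  finally have "1 / epsR R \<le> (8 * Cemb + \<theta>/4 + (2*c1 + c4)/(k*(1-\<eta>3))) * rhoR R" .
  then have "4/\<theta> * (1 / epsR R) \<le> 4/\<theta> * ((8 * Cemb + \<theta>/4 + (2*c1 + c4)/(k*(1-\<eta>3))) * rhoR R)"
    using theta(1) by (intro mult_left_mono) auto
  then show "yR R \<le> Aconst * rhoR R" unfolding yR_def Aconst_def by (simp add: field_simps)
qed

lemma Aconst_pos: "0 < Aconst"
  unfolding Aconst_def using theta(1) Cemb(1) ab1(2) ab2(5) k_pos ab3(2)
  by (intro mult_pos_pos add_pos_nonneg add_pos_pos) auto

lemma LR_small: "\<exists>R1\<ge>0. \<forall>R\<ge>R1. LR R \<le> R / 12"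
proof (cases "\<gamma> = 0")
  case True
  have rho1: "rhoR R = 1" if "0 \<le> R" for R
  proof -
    have "1 + 2 * R + 2 * cP \<noteq> 0" using that cP by simp
    then show ?thesis unfolding rhoR_def using True by simp
  qed
  have yc: "yR R = yR 0" if "0 \<le> R" for R unfolding yR_def epsR_def using rho1[OF that] rho1[of 0] by simp
  define Y0 where "Y0 = yR 0"
  define R1 where "R1 = max 0 (max (24 * CL) (24 * (5/8 * (Y0 * b Y0))))"
  have "LR R \<le> R / 12" if R: "R \<ge> R1" for R
  proof -
    have R0: "0 \<le> R" using R by (simp add: R1_def)
    have "LR R = CL + 5/8 * (Y0 * b Y0)" using LR_eq[OF R0] yc[OF R0] by (simp add: Y0_def)
    moreover have "24 * CL \<le> R" "24 * (5/8 * (Y0 * b Y0)) \<le> R" using R by (auto simp: R1_def)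
    ultimately show ?thesis by linarith
  qed
  then show ?thesis by (intro exI[of _ R1]) (auto simp: R1_def)
next
  case False
  then have g: "\<gamma> > 0" using gam by simp
  have lim: "((\<lambda>x. x powr (1 - 1 / \<gamma>) * b x) \<longlongrightarrow> 0) at_top" using ab3(6) g by blast
  define A where "A = Aconst"
  have A: "0 < A" using Aconst_pos by (simp add: A_def)
  define \<eta>s where "\<eta>s = 1 / (100 * A powr (1/\<gamma>))"
  have \<eta>s: "0 < \<eta>s" using A by (simp add: \<eta>s_def)
  have "\<forall>\<^sub>F x in at_top. dist (x powr (1 - 1 / \<gamma>) * b x) 0 < \<eta>s"
    using tendstoD[OF lim \<eta>s] .
  then obtain X0 where X0: "\<And>x. x \<ge> X0 \<Longrightarrow> \<bar>x powr (1 - 1 / \<gamma>) * b x\<bar> < \<eta>s"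
    unfolding eventually_at_top_linorder by auto
  define X1 where "X1 = max X0 1"
  define Bt where "Bt = (X1 / A) powr (1/\<gamma>)"
  define R1 where "R1 = max (max (1 + 2 * cP) (24 * CL)) Bt"
  have "LR R \<le> R / 12" if R: "R \<ge> R1" for R
  proof -
    have R0: "0 \<le> R" "1 + 2 * cP \<le> R" "24 * CL \<le> R" "Bt \<le> R" using R cP by (auto simp: R1_def)
    define B where "B = 1 + 2 * R + 2 * cP"
    have B: "0 < B" "Bt \<le> B" using R0 cP by (auto simp: B_def)
    define Y where "Y = A * B powr \<gamma>"
    have rY: "A * rhoR R = Y" unfolding Y_def rhoR_def B_def ..
    have Bt0: "0 \<le> Bt" unfolding Bt_def by simp
    have "Bt powr \<gamma> \<le> B powr \<gamma>" using B Bt0 g by (intro powr_mono2) auto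
    moreover have "Bt powr \<gamma> = X1 / A" unfolding Bt_def using A g by (simp add: powr_powr X1_def)
    ultimately have "X1 / A \<le> B powr \<gamma>" by simp
    then have YX: "X1 \<le> Y" unfolding Y_def using A by (simp add: field_simps)
    have Y0: "0 < Y" using YX by (simp add: X1_def)
    have Yp: "Y = Y powr (1/\<gamma>) * Y powr (1 - 1/\<gamma>)" using Y0 by (simp add: powr_add[symmetric])
    have Yp2: "Y powr (1/\<gamma>) = A powr (1/\<gamma>) * B"
      unfolding Y_def using A B g by (simp add: powr_mult powr_powr)
    have "\<bar>Y powr (1 - 1 / \<gamma>) * b Y\<bar> < \<eta>s" using X0 YX by (simp add: X1_def)
    then have sm: "Y powr (1 - 1 / \<gamma>) * b Y \<le> \<eta>s" by simp
    have "Y * b Y = Y powr (1/\<gamma>) * (Y powr (1 - 1/\<gamma>) * b Y)" using Yp by (metis mult.assoc)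
    also have "\<dots> \<le> Y powr (1/\<gamma>) * \<eta>s" using sm by (intro mult_left_mono) auto
    also have "\<dots> = B / 100" unfolding Yp2 \<eta>s_def using A by simp
    finally have YbY: "Y * b Y \<le> B / 100" .
    have "yR R * b (yR R) \<le> Y * b Y" using yR_bound[OF R0(1)] rY by (intro yb_mono) (auto simp: A_def)
    then have "5/8 * (yR R * b (yR R)) \<le> 5/8 * (B / 100)" using YbY by simp
    moreover have "5/8 * (B / 100) \<le> R / 24" using R0 unfolding B_def by simp
    ultimately show ?thesis using LR_eq[OF R0(1)] R0(3) by linarith
  qed
  moreover have "0 \<le> R1" using cP by (simp add: R1_def)
  ultimately show ?thesis by blast
qed

definition "R1c = (SOME R1. R1 \<ge> 0 \<and> (\<forall>R\<ge>R1. LR R \<le> R / 12))"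

lemma R1c: "R1c \<ge> 0" "R \<ge> R1c \<Longrightarrow> LR R \<le> R / 12"
proof -
  have "R1c \<ge> 0 \<and> (\<forall>R\<ge>R1c. LR R \<le> R / 12)" unfolding R1c_def by (rule someI_ex[OF LR_small])
  then show "R1c \<ge> 0" "R \<ge> R1c \<Longrightarrow> LR R \<le> R / 12" by auto
qed

lemma CL_nonneg: "0 \<le> CL"
  unfolding CL_def using cP theta(1) ab1(1) ab2(4) by (simp add: add_nonneg_nonneg)

lemma LR_nonneg: "0 \<le> R \<Longrightarrow> 0 \<le> LR R"
proof -
  assume R: "0 \<le> R"
  have "0 \<le> yR R * b (yR R)" using yR_bound(1)[OF R] ab3(4) by simp
  then show ?thesis using LR_eq[OF R] CL_nonneg by simp
qed

lemma W_ineq: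
  assumes R: "0 \<le> R" and st: "0 \<le> p" "p \<le> q" and bd: "\<forall>r\<in>{p..q}. En y r \<le> R"
  shows "(Vf (epsR R) y q - LR R) - (Vf (epsR R) y p - LR R)
         \<le> - (2 * epsR R * \<theta> / 5) * integral {p..q} (\<lambda>r. Vf (epsR R) y r - LR R)"
proof -
  define \<epsilon> where "\<epsilon> = epsR R"
  have e: "0 < \<epsilon>" using epsR_pos[OF R] by (simp add: \<epsilon>_def)
  have K: "Kc \<epsilon> = (2 * \<epsilon> * \<theta> / 5) * LR R" unfolding LR_def \<epsilon>_def using e theta(1) by (simp add: \<epsilon>_def)
  have "Vf \<epsilon> y q - Vf \<epsilon> y p \<le> integral {p..q} (\<lambda>r. Kc \<epsilon> - (2*\<epsilon>*\<theta>/5) * Vf \<epsilon> y r)"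
    by (rule V_ineq[OF st bd e]) (use epsR_props[OF R] in \<open>simp_all add: \<epsilon>_def\<close>)
  also have "\<dots> = - (2 * \<epsilon> * \<theta> / 5) * integral {p..q} (\<lambda>r. Vf \<epsilon> y r - LR R)"
    unfolding K by (rule int_shift[OF cont_int[OF Vf_cont st(1)] st(2)])
  finally show ?thesis by (simp add: \<epsilon>_def)
qed

definition "C0 = cP + 1"
definition "rhobar = max (4 + 2 * cP) R1c"
definition "Rof \<rho> = 3 * \<rho> + C0"

lemma step_i:
  assumes \<rho>: "\<rho> \<ge> rhobar" and s0: "0 \<le> s0" and E0: "En y s0 \<le> \<rho>" and t: "s0 \<le> t"
  shows "En y t < Rof \<rho>"
proof -
  define R where "R = Rof \<rho>"
  have \<rho>0: "0 \<le> \<rho>" "R1c \<le> \<rho>" using \<rho> cP by (auto simp: rhobar_def)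
  have R0: "0 \<le> R" "R1c \<le> R" "cP + 1 \<le> R" using \<rho>0 cP by (auto simp: R_def Rof_def C0_def)
  define \<epsilon> where "\<epsilon> = epsR R"
  have e: "0 < \<epsilon>" using epsR_pos[OF R0(1)] by (simp add: \<epsilon>_def)
  have eC: "\<epsilon> * Cemb \<le> 1/8" using epsR_props(1)[OF R0(1)] by (simp add: \<epsilon>_def)
  define L where "L = LR R"
  have L: "0 \<le> L" "L \<le> R / 12" using LR_nonneg[OF R0(1)] R1c(2)[OF R0(2)] by (auto simp: L_def)
  have main: "En y t < R"
  proof (rule no_exit[where f = "En y" and a = s0])
    show "continuous_on {s0..} (En y)" using En_cont[of y] s0 by (auto intro: continuous_on_subset)
    show "En y s0 < R" using E0 R0 \<rho>0 cP unfolding R_def Rof_def C0_def by linarith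
    show "s0 \<le> t" using t .
  next
    fix T assume T: "s0 \<le> T" and bd: "\<forall>r\<in>{s0..T}. En y r \<le> R"
    define W where "W r = Vf \<epsilon> y r - L" for r
    have Ws0: "W s0 \<le> max (W s0) 0" by simp
    have cW: "continuous_on {s0..T} W" unfolding W_def
      by (intro continuous_intros continuous_on_subset[OF Vf_cont]) (use s0 in auto)
    have aW: "0 < 2 * \<epsilon> * \<theta> / 5" using e theta(1) by simp
    have iW: "W q - W p \<le> - (2 * \<epsilon> * \<theta> / 5) * integral {p..q} W"
      if ab: "s0 \<le> p" "p \<le> q" "q \<le> T" for p q
    proof -
      have "\<forall>r\<in>{p..q}. En y r \<le> R" using bd ab by auto
      from W_ineq[OF R0(1) _ ab(2) this] ab s0
      show ?thesis unfolding W_def \<epsilon>_def L_def by simp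
    qed
    have WT: "W T \<le> max (W s0) 0"
      by (rule stay_below_T[OF cW aW iW]) (use T in auto)
    have V0: "Vf \<epsilon> y s0 \<le> 5/4 * \<rho> + cP/4" using Vf_bounds(1)[of \<epsilon> y s0] e eC E0 by simp
    have VT: "3/4 * En y T - cP/4 \<le> Vf \<epsilon> y T" using Vf_bounds(2)[of \<epsilon> y T] e eC by simp
    have "Vf \<epsilon> y T \<le> max (5/4 * \<rho> + cP/4) L" using WT V0 unfolding W_def max_def by (auto split: if_splits)
    then have "3/4 * En y T - cP/4 \<le> max (5/4 * \<rho> + cP/4) L" using VT by linarith
    then show "En y T < R" using L R0 \<rho>0 cP unfolding R_def Rof_def C0_def max_def by (auto split: if_splits)
  qed
  show ?thesis using main by (simp add: R_def)
qed

definition "tau \<rho> = (5/4 * \<rho> + cP/4) / (2 * epsR (Rof \<rho>) * \<theta> / 5)"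

lemma rhobar_ge: "4 + 2 * cP \<le> rhobar" "R1c \<le> rhobar" unfolding rhobar_def by auto

lemma step_ii:
  assumes \<rho>: "\<rho> \<ge> rhobar" and s0: "0 \<le> s0" and E0: "En y s0 \<le> \<rho>"
  shows "En y (s0 + tau \<rho>) \<le> 3/4 * \<rho>" "0 \<le> tau \<rho>"
proof -
  define R where "R = Rof \<rho>"
  have \<rho>0: "0 \<le> \<rho>" "R1c \<le> \<rho>" "4 + 2 * cP \<le> \<rho>" using \<rho> cP rhobar_ge by auto
  have R0: "0 \<le> R" "R1c \<le> R" "R = 3 * \<rho> + cP + 1" using \<rho>0 cP by (auto simp: R_def Rof_def C0_def)
  define \<epsilon> where "\<epsilon> = epsR R"
  have e: "0 < \<epsilon>" using epsR_pos[OF R0(1)] by (simp add: \<epsilon>_def)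
  have eC: "\<epsilon> * Cemb \<le> 1/8" using epsR_props(1)[OF R0(1)] by (simp add: \<epsilon>_def)
  define L where "L = LR R"
  have L: "0 \<le> L" "L \<le> R / 12" using LR_nonneg[OF R0(1)] R1c(2)[OF R0(2)] by (auto simp: L_def)
  define \<alpha> where "\<alpha> = 2 * \<epsilon> * \<theta> / 5"
  have a: "0 < \<alpha>" using e theta(1) by (simp add: \<alpha>_def)
  define A where "A = 5/4 * \<rho> + cP/4"
  have A0: "0 \<le> A" using \<rho>0 cP by (simp add: A_def)
  have tauA: "tau \<rho> = A / \<alpha>" unfolding tau_def A_def \<alpha>_def \<epsilon>_def R_def ..
  show t0: "0 \<le> tau \<rho>" unfolding tauA using A0 a by simp
  define W where "W r = Vf \<epsilon> y r - L" for r
  have bd: "En y t \<le> R" if "s0 \<le> t" for t using step_i[OF \<rho> s0 E0 that] by (simp add: R_def)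
  have cW: "continuous_on {s0..} W" unfolding W_def
    by (intro continuous_intros continuous_on_subset[OF Vf_cont]) (use s0 in auto)
  have iW: "W q - W p \<le> - \<alpha> * integral {p..q} W" if ab: "s0 \<le> p" "p \<le> q" for p q
  proof -
    have "\<forall>r\<in>{p..q}. En y r \<le> R" using bd ab by auto
    from W_ineq[OF R0(1) _ ab(2) this] ab s0
    show ?thesis unfolding W_def \<epsilon>_def L_def \<alpha>_def by simp
  qed
  have V0: "Vf \<epsilon> y s0 \<le> 5/4 * \<rho> + cP/4" using Vf_bounds(1)[of \<epsilon> y s0] e eC E0 by simp
  have W0: "W s0 \<le> A" using V0 L unfolding W_def A_def by simp
  have aa: "A \<le> \<alpha> * tau \<rho>" unfolding tauA using a by (simp add: field_simps)
  have "W (s0 + tau \<rho>) \<le> 1"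
    by (rule reach_below[OF cW a iW W0 t0 aa])
  then have V1: "Vf \<epsilon> y (s0 + tau \<rho>) \<le> L + 1" unfolding W_def by simp
  have VT: "3/4 * En y (s0 + tau \<rho>) - cP/4 \<le> Vf \<epsilon> y (s0 + tau \<rho>)" using Vf_bounds(2) e eC by simp
  show "En y (s0 + tau \<rho>) \<le> 3/4 * \<rho>" using V1 VT L R0(3) \<rho>0(3) cP by linarith
qed

lemma tau_nonneg: assumes "\<rho> \<ge> rhobar" shows "0 \<le> tau \<rho>"
proof -
  have \<rho>0: "0 \<le> \<rho>" using assms rhobar_ge cP by linarith
  have "0 \<le> Rof \<rho>" using \<rho>0 cP by (simp add: Rof_def C0_def)
  then have "0 < epsR (Rof \<rho>)" by (rule epsR_pos)
  then show ?thesis unfolding tau_def using \<rho>0 cP theta(1) by simp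
qed

lemma iter: "\<exists>T\<ge>0. \<forall>y s0. 0 \<le> s0 \<longrightarrow> En y s0 \<le> (4/3)^n * rhobar \<longrightarrow> (\<forall>t\<ge>s0 + T. En y t < Rof rhobar)"
proof (induction n)
  case 0
  show ?case by (intro exI[of _ 0]) (auto intro: step_i)
next
  case (Suc n)
  then obtain T where T: "T \<ge> 0" "\<forall>y s0. 0 \<le> s0 \<longrightarrow> En y s0 \<le> (4/3)^n * rhobar \<longrightarrow> (\<forall>t\<ge>s0 + T. En y t < Rof rhobar)" by blast
  define \<rho> where "\<rho> = (4/3)^Suc n * rhobar"
  have rb0: "0 \<le> rhobar" using rhobar_ge cP by linarith
  have p1: "1 \<le> (4/3::real)^Suc n" by (rule one_le_power) simp
  have \<rho>: "\<rho> \<ge> rhobar" unfolding \<rho>_def using mult_right_mono[OF p1 rb0] by simp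
  have t0: "0 \<le> tau \<rho>" using tau_nonneg[OF \<rho>] .
  have "\<forall>y s0. 0 \<le> s0 \<longrightarrow> En y s0 \<le> \<rho> \<longrightarrow> (\<forall>t\<ge>s0 + (tau \<rho> + T). En y t < Rof rhobar)"
  proof (intro allI impI)
    fix y s0 t assume s0: "0 \<le> s0" and E0: "En y s0 \<le> \<rho>" and t: "t \<ge> s0 + (tau \<rho> + T)"
    have "En y (s0 + tau \<rho>) \<le> 3/4 * \<rho>" using step_ii(1)[OF \<rho> s0 E0] .
    also have "3/4 * \<rho> = (4/3)^n * rhobar" unfolding \<rho>_def by simp
    finally have "En y (s0 + tau \<rho>) \<le> (4/3)^n * rhobar" .
    moreover have "0 \<le> s0 + tau \<rho>" using s0 t0 by simp
    moreover note T2 = T(2)[THEN spec[where x=y], THEN spec[where x="s0 + tau \<rho>"]]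
    ultimately have "\<forall>t\<ge>s0 + tau \<rho> + T. En y t < Rof rhobar" by (simp only: simp_thms)
    then show "En y t < Rof rhobar" using t by (simp add: add.assoc)
  qed
  moreover have "0 \<le> tau \<rho> + T" using T(1) t0 by simp
  ultimately show ?case unfolding \<rho>_def by blast
qed

lemma dissipative:
  assumes S_zero: "\<forall>y. S 0 y = y"
  shows "\<exists>R0>0. \<forall>B. bounded B \<longrightarrow> (\<exists>t0\<ge>0. \<forall>y\<in>B. \<forall>t\<ge>t0. norm (S t y) \<le> R0)"
proof -
  define Rb where "Rb = Rof rhobar"
  define R0 where "R0 = sqrt (4 * Rb + 4 * cP) + 1"
  have "bounded B \<longrightarrow> (\<exists>t0\<ge>0. \<forall>y\<in>B. \<forall>t\<ge>t0. norm (S t y) \<le> R0)" for B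
  proof
    assume "bounded B"
    then obtain Bd where Bd: "\<forall>y\<in>B. norm y \<le> Bd" unfolding bounded_iff by blast
    obtain P where P: "P \<ge> 0" "\<And>x. norm x \<le> Bd \<Longrightarrow> Pi0 x \<le> P" using Pi0_bdd' by blast
    define M where "M = 3/2 * (Bd\<^sup>2 / 2 + P) + cP"
    have rb: "0 < rhobar" using rhobar_ge cP by linarith
    obtain n where n: "M / rhobar < (4/3::real)^n" using real_arch_pow[of "4/3" "M / rhobar"] by auto
    then have Mn: "M \<le> (4/3)^n * rhobar" using rb by (simp add: field_simps)
    obtain T where T: "T \<ge> 0" "\<forall>y s0. 0 \<le> s0 \<longrightarrow> En y s0 \<le> (4/3)^n * rhobar \<longrightarrow> (\<forall>t\<ge>s0 + T. En y t < Rof rhobar)"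
      using iter by blast
    have "\<forall>y\<in>B. \<forall>t\<ge>T. norm (S t y) \<le> R0"
    proof (intro ballI allI impI)
      fix y t assume y: "y \<in> B" and t: "t \<ge> T"
      have ny: "norm y \<le> Bd" using Bd y by blast
      have "norm (fst y) \<le> norm y" "norm (snd y) \<le> norm y" by (metis norm_fst_le prod.collapse, metis norm_snd_le prod.collapse)
      then have nfy: "norm (fst y) \<le> Bd" "norm (snd y) \<le> Bd" using ny by linarith+
      have sq: "(norm (fst y))\<^sup>2 + (norm (snd y))\<^sup>2 \<le> Bd\<^sup>2"
      proof -
        have "norm y = sqrt ((norm (fst y))\<^sup>2 + (norm (snd y))\<^sup>2)" by (metis norm_Pair prod.collapse)
        then have "(norm y)\<^sup>2 = (norm (fst y))\<^sup>2 + (norm (snd y))\<^sup>2" by simp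
        moreover have "(norm y)\<^sup>2 \<le> Bd\<^sup>2" using ny by (intro power_mono) auto
        ultimately show ?thesis by simp
      qed
      have E0: "energy_E Pi0 (fst y) (snd y) \<le> Bd\<^sup>2 / 2 + P"
        using sq P(2)[OF nfy(1)] unfolding energy_E_def by argo
      have "En y 0 = energy_full Pi0 Pi1 (fst y) (snd y)" unfolding En_def uu_def ww_def using S_zero[rule_format, of y] by simp
      also have "\<dots> \<le> 3/2 * energy_E Pi0 (fst y) (snd y) + cP" by (rule E_bounds(2))
      also have "\<dots> \<le> M" unfolding M_def using E0 by simp
      finally have "En y 0 \<le> (4/3)^n * rhobar" using Mn by simp
      then have Et: "En y t < Rb" using T(2)[THEN spec[where x=y], THEN spec[where x=0]] t unfolding Rb_def by simp
      have "norm (S t y) = sqrt ((norm (uu y t))\<^sup>2 + (norm (ww y t))\<^sup>2)"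
        unfolding uu_def ww_def by (metis norm_Pair prod.collapse)
      also have "\<dots> \<le> sqrt (4 * Rb + 4 * cP)"
      proof (rule real_sqrt_le_mono)
        have "(norm (uu y t))\<^sup>2 + (norm (ww y t))\<^sup>2 \<le> 2 * energy_E Pi0 (uu y t) (ww y t)" by (rule E_bounds(4))
        moreover have "energy_E Pi0 (uu y t) (ww y t) \<le> 2 * En y t + 2 * cP" unfolding En_def by (rule E_bounds(1))
        ultimately show "(norm (uu y t))\<^sup>2 + (norm (ww y t))\<^sup>2 \<le> 4 * Rb + 4 * cP" using Et by linarith
      qed
      also have "\<dots> \<le> R0" unfolding R0_def by simp
      finally show "norm (S t y) \<le> R0" .
    qed
    then show "\<exists>t0\<ge>0. \<forall>y\<in>B. \<forall>t\<ge>t0. norm (S t y) \<le> R0" using T(1) by blast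
  qed
  moreover have "R0 > 0"
  proof -
    have "0 \<le> 4 * Rb + 4 * cP" using rhobar_ge cP unfolding Rb_def Rof_def C0_def by argo
    then show ?thesis unfolding R0_def by (simp add: add_nonneg_pos)
  qed
  ultimately show ?thesis by blast
qed

end

lemma absorbing_from_diss:
  fixes S :: "real \<Rightarrow> 'a::real_normed_vector \<Rightarrow> 'a"
  assumes semi: "\<forall>t s y. 0 \<le> t \<longrightarrow> 0 \<le> s \<longrightarrow> S (t + s) y = S t (S s y)"
    and diss: "\<exists>R0>0. \<forall>B. bounded B \<longrightarrow> (\<exists>t0\<ge>0. \<forall>y\<in>B. \<forall>t\<ge>t0. norm (S t y) \<le> R0)"
  shows "\<exists>B0. bounded B0 \<and> forward_invariant S B0 \<and> absorbing_set S B0"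
proof -
  obtain R0 where R0: "R0 > 0" "\<forall>B. bounded B \<longrightarrow> (\<exists>t0\<ge>0. \<forall>y\<in>B. \<forall>t\<ge>t0. norm (S t y) \<le> R0)"
    using diss by blast
  obtain t1 where t1: "t1 \<ge> 0" "\<forall>y\<in>cball 0 R0. \<forall>t\<ge>t1. norm (S t y) \<le> R0"
    using R0(2) bounded_cball by blast
  define B0 where "B0 = {S t y | t y. t \<ge> t1 \<and> y \<in> cball 0 R0}"
  have "B0 \<subseteq> cball 0 R0" unfolding B0_def using t1(2) by auto
  then have b: "bounded B0" using bounded_subset bounded_cball by blast
  have f: "forward_invariant S B0" unfolding forward_invariant_def
  proof (intro allI impI subsetI)
    fix s x assume s: "0 \<le> s" and x: "x \<in> S s ` B0"
    then obtain t y where ty: "t \<ge> t1" "y \<in> cball 0 R0" "x = S s (S t y)" unfolding B0_def by blast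
    have "S (s + t) y = S s (S t y)" using semi s ty t1 by auto
    then show "x \<in> B0" unfolding B0_def using ty s by (intro CollectI exI[of _ "s + t"] exI[of _ y]) auto
  qed
  have a: "absorbing_set S B0" unfolding absorbing_set_def
  proof (intro allI impI)
    fix B :: "'a set" assume "bounded B"
    then obtain t0 where t0: "t0 \<ge> 0" "\<forall>y\<in>B. \<forall>t\<ge>t0. norm (S t y) \<le> R0" using R0(2) by blast
    have "\<forall>t\<ge>t0 + t1. S t ` B \<subseteq> B0"
    proof (intro allI impI subsetI)
      fix t x assume t: "t0 + t1 \<le> t" and x: "x \<in> S t ` B"
      then obtain y where y: "y \<in> B" "x = S t y" by blast
      have "S t y = S t1 (S (t - t1) y)" using semi[rule_format, of t1 "t - t1" y] t t0 t1 by simp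
      moreover have "S (t - t1) y \<in> cball 0 R0" using t0(2) y t by auto
      ultimately show "x \<in> B0" unfolding B0_def using y t1 by blast
    qed
    then show "\<exists>t0\<ge>0. \<forall>t\<ge>t0. S t ` B \<subseteq> B0" using t0(1) t1(1) by (intro exI[of _ "t0 + t1"]) auto
  qed
  show ?thesis using b f a by blast
qed

theorem mainTheorem9:
  fixes \<iota> :: "'v::{real_inner,complete_space} \<Rightarrow> 'h::{real_inner,complete_space}"
    and k :: real
    and D :: "'v \<Rightarrow> ('v \<Rightarrow>\<^sub>L real)"
    and F N :: "'v \<Rightarrow> 'h"
    and Pi0 Pi1 :: "'v \<Rightarrow> real"
    and Pi' :: "'v \<Rightarrow> ('v \<Rightarrow>\<^sub>L real)"
    and S :: "real \<Rightarrow> 'v \<times> 'h \<Rightarrow> 'v \<times> 'h"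
    and \<gamma> :: real
  \<comment> \<open>the operator A (via D(A^{1/2}) and its embedding into H_0)\<close>
  assumes emb_lin: "bounded_linear \<iota>"
    and emb_inj: "inj \<iota>"
    and emb_dense: "closure (range \<iota>) = UNIV"
    and k_pos: "k > 0"
  \<comment> \<open>(AB1)(i)\<close>
    and D_mono: "\<forall>u v. 0 \<le> blinfun_apply (D u) (u - v) - blinfun_apply (D v) (u - v)"
    and D_hemi: "\<forall>u v w. continuous_on UNIV (\<lambda>s::real. blinfun_apply (D (u + s *\<^sub>R v)) w)"
    and D_zero: "D 0 = 0"
  \<comment> \<open>(AB1)(ii)\<close>
    and F_loclip: "\<forall>R. \<exists>L. \<forall>x y. norm x \<le> R \<longrightarrow> norm y \<le> R \<longrightarrow> norm (F x - F y) \<le> L * norm (x - y)"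
    and Pi_deriv: "\<forall>u. ((\<lambda>x. Pi0 x + Pi1 x) has_derivative blinfun_apply (Pi' u)) (at u)"
    and Pi_C1: "continuous_on UNIV Pi'"
    and F_decomp: "\<forall>u w. inner (F u) (\<iota> w) = - blinfun_apply (Pi' u) w + inner (N u) (\<iota> w)"
    and Pi0_nonneg: "\<forall>u. 0 \<le> Pi0 u"
    and Pi0_bdd: "\<forall>R. \<exists>C. \<forall>u. norm u \<le> R \<longrightarrow> Pi0 u \<le> C"
    and Pi1_bound: "\<forall>\<eta>>0. \<exists>c\<ge>0. \<forall>u. \<bar>Pi1 u\<bar> \<le> \<eta> * ((norm u)\<^sup>2 + Pi0 u) + c"
  \<comment> \<open>(AB1)(iii)\<close>
    and N_bound: "\<exists>c1>0. \<exists>c2>0. \<exists>k0. 0 \<le> k0 \<and> k0 < k \<and>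
        (\<forall>u v. inner (N u) (\<iota> v) \<le> c1 + c2 * ((norm u)\<^sup>2 + (norm (\<iota> v))\<^sup>2 + Pi0 u)
                                   + k0 * blinfun_apply (D v) v)"
  \<comment> \<open>well-posedness: S is a (continuous) dynamical system on H whose trajectories are
      solutions satisfying the energy identity\<close>
    and S_zero: "\<forall>y. S 0 y = y"
    and S_semigroup: "\<forall>t s y. 0 \<le> t \<longrightarrow> 0 \<le> s \<longrightarrow> S (t + s) y = S t (S s y)"
    and S_cont: "\<forall>t\<ge>0. continuous_on UNIV (S t)"
    and S_sol: "\<forall>y. weak_solution \<iota> k D F (\<lambda>t. fst (S t y)) (\<lambda>t. snd (S t y))"
    and S_energy: "\<forall>y. energy_identity \<iota> k D N Pi0 Pi1 (\<lambda>t. fst (S t y)) (\<lambda>t. snd (S t y))"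
  \<comment> \<open>(AB2)\<close>
    and gamma_range: "0 \<le> \<gamma> \<and> \<gamma> < 1"
    and AB2_i: "\<exists>c0\<ge>0. \<exists>c1>0. \<forall>v. (norm (\<iota> v))\<^sup>2 \<le> c0 + c1 * blinfun_apply (D v) v"
    and AB2_ii: "\<exists>\<eta>. 0 \<le> \<eta> \<and> \<eta> < 1 \<and> (\<exists>c2>0. \<exists>c3\<ge>0. \<exists>c4\<ge>0. \<forall>u v.
        - k * blinfun_apply (D v) u + inner (N u) (\<iota> u)
          \<le> blinfun_apply (Pi' u) u + \<eta> * (norm u)\<^sup>2 - c2 * Pi0 u + c3
             + c4 * (1 + energy_E Pi0 u (\<iota> v)) powr \<gamma> * blinfun_apply (D v) v)"
    and AB2_iii: "\<exists>\<eta> b. 0 \<le> \<eta> \<and> \<eta> < 1 \<and> mono_on {0..} b \<and> continuous_on {0..} b \<and>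
        (\<forall>x\<ge>0. 0 \<le> b x) \<and>
        (\<forall>u v \<delta>. 0 < \<delta> \<longrightarrow> \<delta> \<le> 1 \<longrightarrow>
            inner (N u) (\<iota> v) \<le> \<eta> * k * blinfun_apply (D v) v + \<delta> * energy_E Pi0 u (\<iota> v) + b (1 / \<delta>)) \<and>
        (\<gamma> > 0 \<longrightarrow> ((\<lambda>x. x powr (1 - 1 / \<gamma>) * b x) \<longlongrightarrow> 0) at_top)"
  shows "(\<exists>R0>0. \<forall>B. bounded B \<longrightarrow> (\<exists>t0\<ge>0. \<forall>y\<in>B. \<forall>t\<ge>t0. norm (S t y) \<le> R0))
         \<and> (\<exists>B0. bounded B0 \<and> forward_invariant S B0 \<and> absorbing_set S B0)"
  proof -
  obtain c0 c1 where C1: "c0 \<ge> 0" "c1 > 0" "\<forall>v. (norm (\<iota> v))\<^sup>2 \<le> c0 + c1 * blinfun_apply (D v) v"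
    using AB2_i by blast
  obtain \<eta>2 c2 c3 c4 where C2: "0 \<le> \<eta>2" "\<eta>2 < 1" "c2 > 0" "c3 \<ge> 0" "c4 \<ge> 0"
      "\<forall>u v. - k * blinfun_apply (D v) u + inner (N u) (\<iota> u)
          \<le> blinfun_apply (Pi' u) u + \<eta>2 * (norm u)\<^sup>2 - c2 * Pi0 u + c3
             + c4 * (1 + energy_E Pi0 u (\<iota> v)) powr \<gamma> * blinfun_apply (D v) v"
    using AB2_ii by blast
  obtain \<eta>3 b where C3: "0 \<le> \<eta>3" "\<eta>3 < 1" "mono_on {0..} b" "\<forall>x\<ge>0. 0 \<le> b x"
      "\<forall>u v \<delta>. 0 < \<delta> \<longrightarrow> \<delta> \<le> 1 \<longrightarrow>
            inner (N u) (\<iota> v) \<le> \<eta>3 * k * blinfun_apply (D v) v + \<delta> * energy_E Pi0 u (\<iota> v) + b (1 / \<delta>)"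
      "\<gamma> > 0 \<longrightarrow> ((\<lambda>x. x powr (1 - 1 / \<gamma>) * b x) \<longlongrightarrow> 0) at_top"
    using AB2_iii by blast
  obtain cP where CP: "cP \<ge> 0" "\<forall>u. \<bar>Pi1 u\<bar> \<le> 1/4 * ((norm u)\<^sup>2 + Pi0 u) + cP"
    using Pi1_bound[rule_format, of "1/4"] by auto
  have gam: "0 \<le> \<gamma>" "\<gamma> < 1" using gamma_range by auto
  have loc: "diss \<iota> k D F N Pi0 Pi1 Pi' S \<gamma> c0 c1 \<eta>2 c2 c3 c4 \<eta>3 cP b"
    unfolding diss_def
    using emb_lin k_pos D_mono D_zero F_loclip Pi_deriv F_decomp Pi0_nonneg Pi0_bdd CP S_sol S_energy gam C1 C2 C3
    by blast
  have P1: "\<exists>R0>0. \<forall>B. bounded B \<longrightarrow> (\<exists>t0\<ge>0. \<forall>y\<in>B. \<forall>t\<ge>t0. norm (S t y) \<le> R0)"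
    by (rule diss.dissipative[OF loc S_zero])
  have P2: "\<exists>B0. bounded B0 \<and> forward_invariant S B0 \<and> absorbing_set S B0"
    by (rule absorbing_from_diss[OF S_semigroup P1])
  show ?thesis using P1 P2 by blast
qed

end
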